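(* Let ${\mathbf{X}}^{({\mathbf{A}})}_1,\dots,{\mathbf{X}}^{({\mathbf{A}})}_s,{\mathbf{X}}^{({\mathbf{B}})}_1,\dots,{\mathbf{X}}^{({\mathbf{B}})}_t\in\mathbb{R}^{m\times n}$, ${\mathbf{A}}_i\in\mathbb{R}^{k_i\times m}$ ($i=1,\dots,s$), ${\mathbf{B}}_j\in\mathbb{R}^{n\times \ell_j}$ ($j=1,\dots,t$), and consider $$F({\mathbf{U}},{\mathbf{V}})=\frac12\sum_{i=1}^s\|{\mathbf{A}}_i({\mathbf{X}}^{({\mathbf{A}})}_i-{\mathbf{U}}{\mathbf{V}}^T)\|_F^2+\frac12\sum_{j=1}^t\|({\mathbf{X}}^{({\mathbf{B}})}_j-{\mathbf{U}}{\mathbf{V}}^T){\mathbf{B}}_j\|_F^2$$ for ${\mathbf{U}}\in\mathbb{R}^{m\times r},{\mathbf{V}}\in\mathbb{R}^{n\times r}$. Suppose the six matrices ${\mathbf{U}}$, ${\mathbf{V}}$, $\sum_i{\mathbf{A}}_i^T{\mathbf{A}}_i$, $\sum_j{\mathbf{B}}_j{\mathbf{B}}_j^T$, $\sum_i{\mathbf{A}}_i^T{\mathbf{A}}_i{\mathbf{X}}^{({\mathbf{A}})}_i$, $\sum_j{\mathbf{X}}^{({\mathbf{B}})}_j{\mathbf{B}}_j{\mathbf{B}}_j^T$ are entrywise nonnegative, and that the denominators below are entrywise positive. Define $${\mathbf{U}}'={\mathbf{U}}\circ\frac{\sum_i{\mathbf{A}}_i^T{\mathbf{A}}_i{\mathbf{X}}^{({\mathbf{A}})}_i{\mathbf{V}}+\sum_j{\mathbf{X}}^{({\mathbf{B}})}_j{\mathbf{B}}_j{\mathbf{B}}_j^T{\mathbf{V}}}{\sum_i{\mathbf{A}}_i^T{\mathbf{A}}_i{\mathbf{U}}{\mathbf{V}}^T{\mathbf{V}}+\sum_j{\mathbf{U}}{\mathbf{V}}^T{\mathbf{B}}_j{\mathbf{B}}_j^T{\mathbf{V}}},\qquad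 {\mathbf{V}}'={\mathbf{V}}\circ\frac{\sum_i({\mathbf{X}}^{({\mathbf{A}})}_i)^T{\mathbf{A}}_i^T{\mathbf{A}}_i{\mathbf{U}}+\sum_j{\mathbf{B}}_j{\mathbf{B}}_j^T({\mathbf{X}}^{({\mathbf{B}})}_j)^T{\mathbf{U}}}{\sum_i{\mathbf{V}}{\mathbf{U}}^T{\mathbf{A}}_i^T{\mathbf{A}}_i{\mathbf{U}}+\sum_j{\mathbf{B}}_j{\mathbf{B}}_j^T{\mathbf{V}}{\mathbf{U}}^T{\mathbf{U}}}.$$ Then ${\mathbf{U}}'$ and ${\mathbf{V}}'$ are entrywise nonnegative, $F({\mathbf{U}}',{\mathbf{V}})\le F({\mathbf{U}},{\mathbf{V}})$ and $F({\mathbf{U}},{\mathbf{V}}')\le F({\mathbf{U}},{\mathbf{V}})$. In particular, $F$ is nonincreasing along the alternating iterations that apply these updates in turn.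
   Context: $\circ$ denotes entrywise (Hadamard) product and the fraction bar denotes entrywise division. $\|\cdot\|_F$ is the Frobenius norm. *)

theory Defs
  imports "Jordan_Normal_Form.Matrix"
begin

definition msum :: "nat \<Rightarrow> nat \<Rightarrow> nat \<Rightarrow> (nat \<Rightarrow> real mat) \<Rightarrow> real mat" where
  "msum d1 d2 N f = mat d1 d2 (\<lambda>(a,b). \<Sum>i<N. f i $$ (a,b))"

definition hadamard :: "real mat \<Rightarrow> real mat \<Rightarrow> real mat" where
  "hadamard M N = mat (dim_row M) (dim_col M) (\<lambda>(i,j). M $$ (i,j) * N $$ (i,j))"

definition hdiv :: "real mat \<Rightarrow> real mat \<Rightarrow> real mat" where
  "hdiv M N = mat (dim_row M) (dim_col M) (\<lambda>(i,j). M $$ (i,j) / N $$ (i,j))"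

definition frob :: "real mat \<Rightarrow> real" where
  "frob M = sqrt (\<Sum>i<dim_row M. \<Sum>j<dim_col M. (M $$ (i,j))\<^sup>2)"

definition nonneg_mat :: "real mat \<Rightarrow> bool" where
  "nonneg_mat M \<longleftrightarrow> (\<forall>i<dim_row M. \<forall>j<dim_col M. M $$ (i,j) \<ge> 0)"

definition pos_mat :: "real mat \<Rightarrow> bool" where
  "pos_mat M \<longleftrightarrow> (\<forall>i<dim_row M. \<forall>j<dim_col M. M $$ (i,j) > 0)"

text \<open>The objective F(U,V); indices i range over 0..s-1 and j over 0..t-1.\<close>
definition objF :: "nat \<Rightarrow> nat \<Rightarrow> (nat \<Rightarrow> real mat) \<Rightarrow> (nat \<Rightarrow> real mat) \<Rightarrow>
    (nat \<Rightarrow> real mat) \<Rightarrow> (nat \<Rightarrow> real mat) \<Rightarrow> real mat \<Rightarrow> real mat \<Rightarrow> real" where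
  "objF s t XA XB A B U V =
     (1/2) * (\<Sum>i<s. (frob (A i * (XA i - U * transpose_mat V)))\<^sup>2)
   + (1/2) * (\<Sum>j<t. (frob ((XB j - U * transpose_mat V) * B j))\<^sup>2)"

end

theory Submission
  imports Defs
begin

definition ip :: "real mat \<Rightarrow> real mat \<Rightarrow> real" where
  "ip M N = (\<Sum>a<dim_row M. \<Sum>b<dim_col M. M $$ (a,b) * N $$ (a,b))"

lemma mult_entry:
  assumes "A \<in> carrier_mat p q" "B \<in> carrier_mat q r" "i < p" "j < r"
  shows "(A * B) $$ (i,j) = (\<Sum>k<q. A $$ (i,k) * B $$ (k,j))"
  using assms by (auto simp: scalar_prod_def lessThan_atLeast0 intro!: sum.cong)

lemma ip_adjL:
  assumes A: "A \<in> carrier_mat k m" and N: "N \<in> carrier_mat m n" and M: "M \<in> carrier_mat k n"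
  shows "ip M (A * N) = ip (transpose_mat A * M) N"
proof -
  have "ip M (A * N) = (\<Sum>a<k. \<Sum>b<n. \<Sum>c<m. M $$ (a,b) * A $$ (a,c) * N $$ (c,b))"
    unfolding ip_def using A N M by (auto simp: mult_entry[OF A N] sum_distrib_left mult.assoc simp del: index_mult_mat(1) intro!: sum.cong)
  also have "\<dots> = (\<Sum>b<n. \<Sum>a<k. \<Sum>c<m. M $$ (a,b) * A $$ (a,c) * N $$ (c,b))"
    by (rule sum.swap)
  also have "\<dots> = (\<Sum>b<n. \<Sum>c<m. \<Sum>a<k. M $$ (a,b) * A $$ (a,c) * N $$ (c,b))"
    by (rule sum.cong[OF refl], rule sum.swap)
  also have "\<dots> = (\<Sum>c<m. \<Sum>b<n. \<Sum>a<k. M $$ (a,b) * A $$ (a,c) * N $$ (c,b))"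
    by (rule sum.swap)
  also have "\<dots> = ip (transpose_mat A * M) N"
    unfolding ip_def using A N M
    by (auto simp: mult_entry[of "transpose_mat A" m k M n] sum_distrib_right sum_distrib_left mult.commute mult.left_commute simp del: index_mult_mat(1) intro!: sum.cong)
  finally show ?thesis .
qed

lemma ip_adjR:
  assumes N: "N \<in> carrier_mat m n" and B: "B \<in> carrier_mat n l" and M: "M \<in> carrier_mat m l"
  shows "ip M (N * B) = ip (M * transpose_mat B) N"
proof -
  have "ip M (N * B) = (\<Sum>a<m. \<Sum>b<l. \<Sum>c<n. M $$ (a,b) * N $$ (a,c) * B $$ (c,b))"
    unfolding ip_def using B N M by (auto simp: mult_entry[OF N B] sum_distrib_left mult.assoc simp del: index_mult_mat(1) intro!: sum.cong)
  also have "\<dots> = (\<Sum>a<m. \<Sum>c<n. \<Sum>b<l. M $$ (a,b) * N $$ (a,c) * B $$ (c,b))"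
    by (rule sum.cong[OF refl], rule sum.swap)
  also have "\<dots> = ip (M * transpose_mat B) N"
    unfolding ip_def using B N M
    by (auto simp: mult_entry[of M m l "transpose_mat B" n] sum_distrib_right sum_distrib_left mult.commute mult.left_commute simp del: index_mult_mat(1) intro!: sum.cong)
  finally show ?thesis .
qed

lemma ip_transpose:
  assumes "M \<in> carrier_mat p q" "N \<in> carrier_mat q p"
  shows "ip M (transpose_mat N) = ip (transpose_mat M) N"
  unfolding ip_def using assms by (auto intro: sum.swap)

lemma ip_sym: assumes "M \<in> carrier_mat p q" "N \<in> carrier_mat p q" shows "ip M N = ip N M"
  unfolding ip_def using assms by (auto simp: mult.commute)

lemma ip_add_left: assumes "M \<in> carrier_mat p q" "N \<in> carrier_mat p q" 
  shows "ip (M + N) K = ip M K + ip N K"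
  unfolding ip_def using assms by (auto simp: algebra_simps sum.distrib)

lemma ip_minus_left: assumes "M \<in> carrier_mat p q" "N \<in> carrier_mat p q" 
  shows "ip (M - N) K = ip M K - ip N K"
  unfolding ip_def using assms by (auto simp: algebra_simps sum_subtractf)

lemma ip_add_right: assumes "M \<in> carrier_mat p q" "N \<in> carrier_mat p q" "K \<in> carrier_mat p q"
  shows "ip K (M + N) = ip K M + ip K N"
  unfolding ip_def using assms by (auto simp: algebra_simps sum.distrib)

lemma ip_minus_right: assumes "M \<in> carrier_mat p q" "N \<in> carrier_mat p q" "K \<in> carrier_mat p q"
  shows "ip K (M - N) = ip K M - ip K N"
  unfolding ip_def using assms by (auto simp: algebra_simps sum_subtractf)

lemma ip_sq: assumes "M \<in> carrier_mat p q" "N \<in> carrier_mat p q"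
  shows "ip (M - N) (M - N) = ip M M - 2 * ip M N + ip N N"
  using assms by (simp add: ip_minus_left ip_minus_right ip_sym[of N p q M])

lemma frob_sq: "(frob M)^2 = ip M M"
  unfolding frob_def ip_def by (simp add: power2_eq_square[symmetric] sum_nonneg)




lemma msum_carrier[simp]: "msum d1 d2 N f \<in> carrier_mat d1 d2"
  unfolding msum_def by auto
lemma msum_dims[simp]: "dim_row (msum d1 d2 N f) = d1" "dim_col (msum d1 d2 N f) = d2"
  unfolding msum_def by auto
lemma msum_index[simp]: "a < d1 \<Longrightarrow> b < d2 \<Longrightarrow> msum d1 d2 N f $$ (a,b) = (\<Sum>i<N. f i $$ (a,b))"
  unfolding msum_def by auto

lemma msum_cong: "(\<And>i. i < N \<Longrightarrow> f i = g i) \<Longrightarrow> msum d1 d2 N f = msum d1 d2 N g"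
  unfolding msum_def by auto

lemma msum_mult_right:
  assumes f: "\<And>i. i < N \<Longrightarrow> f i \<in> carrier_mat d1 d2" and C: "C \<in> carrier_mat d2 d3"
  shows "msum d1 d3 N (\<lambda>i. f i * C) = msum d1 d2 N f * C"
proof (rule eq_matI)
  fix a b assume a: "a < dim_row (msum d1 d2 N f * C)" and b: "b < dim_col (msum d1 d2 N f * C)"
  hence ab: "a < d1" "b < d3" using C by auto
  have "msum d1 d3 N (\<lambda>i. f i * C) $$ (a,b) = (\<Sum>i<N. \<Sum>k<d2. f i $$ (a,k) * C $$ (k,b))"
    using ab f C by (auto simp: mult_entry[OF f C] simp del: index_mult_mat(1) intro!: sum.cong)
  also have "\<dots> = (\<Sum>k<d2. \<Sum>i<N. f i $$ (a,k) * C $$ (k,b))" by (rule sum.swap)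
  also have "\<dots> = (msum d1 d2 N f * C) $$ (a,b)"
    using ab C by (auto simp: mult_entry[OF msum_carrier C] sum_distrib_right simp del: index_mult_mat(1))
  finally show "msum d1 d3 N (\<lambda>i. f i * C) $$ (a,b) = (msum d1 d2 N f * C) $$ (a,b)" .
qed (use C in auto)

lemma msum_mult_left:
  assumes f: "\<And>i. i < N \<Longrightarrow> f i \<in> carrier_mat d1 d2" and C: "C \<in> carrier_mat d0 d1"
  shows "msum d0 d2 N (\<lambda>i. C * f i) = C * msum d1 d2 N f"
proof (rule eq_matI)
  fix a b assume a: "a < dim_row (C * msum d1 d2 N f)" and b: "b < dim_col (C * msum d1 d2 N f)"
  hence ab: "a < d0" "b < d2" using C by auto
  have "msum d0 d2 N (\<lambda>i. C * f i) $$ (a,b) = (\<Sum>i<N. \<Sum>k<d1. C $$ (a,k) * f i $$ (k,b))"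
    using ab f C by (auto simp: mult_entry[OF C f] simp del: index_mult_mat(1) intro!: sum.cong)
  also have "\<dots> = (\<Sum>k<d1. \<Sum>i<N. C $$ (a,k) * f i $$ (k,b))" by (rule sum.swap)
  also have "\<dots> = (C * msum d1 d2 N f) $$ (a,b)"
    using ab C by (auto simp: mult_entry[OF C msum_carrier] sum_distrib_left simp del: index_mult_mat(1))
  finally show "msum d0 d2 N (\<lambda>i. C * f i) $$ (a,b) = (C * msum d1 d2 N f) $$ (a,b)" .
qed (use C in auto)

lemma msum_minus:
  assumes "\<And>i. i < N \<Longrightarrow> f i \<in> carrier_mat d1 d2" "\<And>i. i < N \<Longrightarrow> g i \<in> carrier_mat d1 d2"
  shows "msum d1 d2 N (\<lambda>i. f i - g i) = msum d1 d2 N f - msum d1 d2 N g"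
proof (rule eq_matI)
  fix i j assume ij: "i < dim_row (msum d1 d2 N f - msum d1 d2 N g)" "j < dim_col (msum d1 d2 N f - msum d1 d2 N g)"
  hence "(\<Sum>ia<N. (f ia - g ia) $$ (i, j)) = (\<Sum>ia<N. f ia $$ (i, j) - g ia $$ (i, j))"
  proof (intro sum.cong refl)
    fix x assume "x \<in> {..<N}"
    hence "f x \<in> carrier_mat d1 d2" "g x \<in> carrier_mat d1 d2" using assms by auto
    thus "(f x - g x) $$ (i, j) = f x $$ (i, j) - g x $$ (i, j)" using ij by auto
  qed
  thus "msum d1 d2 N (\<lambda>i. f i - g i) $$ (i, j) = (msum d1 d2 N f - msum d1 d2 N g) $$ (i, j)"
    using ij by (simp add: sum_subtractf)
qed auto

lemma ip_msum:
  assumes "\<And>i. i < N \<Longrightarrow> f i \<in> carrier_mat d1 d2"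
  shows "ip (msum d1 d2 N f) K = (\<Sum>i<N. ip (f i) K)"
proof -
  have "ip (msum d1 d2 N f) K = (\<Sum>a<d1. \<Sum>b<d2. \<Sum>i<N. f i $$ (a,b) * K $$ (a,b))"
    unfolding ip_def by (auto simp: sum_distrib_right)
  also have "\<dots> = (\<Sum>a<d1. \<Sum>i<N. \<Sum>b<d2. f i $$ (a,b) * K $$ (a,b))"
    by (rule sum.cong[OF refl], rule sum.swap)
  also have "\<dots> = (\<Sum>i<N. \<Sum>a<d1. \<Sum>b<d2. f i $$ (a,b) * K $$ (a,b))"
    by (rule sum.swap)
  also have "\<dots> = (\<Sum>i<N. ip (f i) K)"
    unfolding ip_def using assms by (auto intro!: sum.cong)
  finally show ?thesis .
qed

lemma nonneg_mult:
  assumes "nonneg_mat A" "nonneg_mat B" "A \<in> carrier_mat p q" "B \<in> carrier_mat q r"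
  shows "nonneg_mat (A * B)"
  using assms unfolding nonneg_mat_def
  by (auto simp: mult_entry[OF assms(3,4)] simp del: index_mult_mat(1) intro!: sum_nonneg)

lemma nonneg_transpose: "nonneg_mat A \<Longrightarrow> nonneg_mat (transpose_mat A)"
  unfolding nonneg_mat_def by auto

lemma nonneg_one: "nonneg_mat (1\<^sub>m n)"
  unfolding nonneg_mat_def by auto

lemma mu_step:
  fixes G :: "real mat \<Rightarrow> real" and H :: "real mat \<Rightarrow> real mat"
  assumes U: "U \<in> carrier_mat d1 d2" and Nc: "N \<in> carrier_mat d1 d2" and Dc: "D \<in> carrier_mat d1 d2"
    and nnU: "nonneg_mat U" and nnN: "nonneg_mat N" and posD: "pos_mat D"
    and ex: "\<And>\<Delta>. \<Delta> \<in> carrier_mat d1 d2 \<Longrightarrow> G (U + \<Delta>) = G U + ip (D - N) \<Delta> + 1/2 * ip (H \<Delta>) \<Delta>"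
    and dom: "\<And>X w. X \<in> carrier_mat d1 d2 \<Longrightarrow> (\<And>a b. a < d1 \<Longrightarrow> b < d2 \<Longrightarrow> X $$ (a,b) = U $$ (a,b) * w a b)
        \<Longrightarrow> ip (H X) X \<le> (\<Sum>a<d1. \<Sum>b<d2. D $$ (a,b) * U $$ (a,b) * (w a b)^2)"
  shows "nonneg_mat (hadamard U (hdiv N D)) \<and> G (hadamard U (hdiv N D)) \<le> G U"
proof -
  define U' where "U' = hadamard U (hdiv N D)"
  have U'c: "U' \<in> carrier_mat d1 d2" unfolding U'_def hadamard_def using U by auto
  have U'e: "U' $$ (a,b) = U $$ (a,b) * (N $$ (a,b) / D $$ (a,b))" if "a < d1" "b < d2" for a b
    unfolding U'_def hadamard_def hdiv_def using that U Nc by auto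
  have Dp: "D $$ (a,b) > 0" if "a < d1" "b < d2" for a b using posD that Dc unfolding pos_mat_def by auto
  have Ue: "U $$ (a,b) \<ge> 0" if "a < d1" "b < d2" for a b using nnU that U unfolding nonneg_mat_def by auto
  have Ne: "N $$ (a,b) \<ge> 0" if "a < d1" "b < d2" for a b using nnN that Nc unfolding nonneg_mat_def by auto
  have nn: "nonneg_mat U'" unfolding nonneg_mat_def using U'c
    by (auto simp: U'e Ue Ne Dp less_imp_le)
  define w where "w a b = N $$ (a,b) / D $$ (a,b) - 1" for a b
  define \<Delta> where "\<Delta> = U' - U"
  have \<Delta>c: "\<Delta> \<in> carrier_mat d1 d2" unfolding \<Delta>_def using U U'c by auto
  have \<Delta>e: "\<Delta> $$ (a,b) = U $$ (a,b) * w a b" if "a < d1" "b < d2" for a b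
    unfolding \<Delta>_def w_def using that U U'c by (auto simp: U'e algebra_simps)
  have UU: "U + \<Delta> = U'" unfolding \<Delta>_def by (rule eq_matI, use U U'c in auto)
  have "G U' = G U + ip (D - N) \<Delta> + 1/2 * ip (H \<Delta>) \<Delta>" using ex[OF \<Delta>c] UU by simp
  also have "\<dots> \<le> G U + ip (D - N) \<Delta> + 1/2 * (\<Sum>a<d1. \<Sum>b<d2. D $$ (a,b) * U $$ (a,b) * (w a b)^2)"
    using dom[OF \<Delta>c \<Delta>e] by simp
  also have "ip (D - N) \<Delta> = (\<Sum>a<d1. \<Sum>b<d2. - (D $$ (a,b) * U $$ (a,b) * (w a b)^2))"
    unfolding ip_def using Dc Nc
    by (auto simp: \<Delta>e w_def power2_eq_square field_simps Dp less_imp_neq[OF Dp, symmetric] intro!: sum.cong)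
  also have "G U + (\<Sum>a<d1. \<Sum>b<d2. - (D $$ (a,b) * U $$ (a,b) * (w a b)^2))
      + 1/2 * (\<Sum>a<d1. \<Sum>b<d2. D $$ (a,b) * U $$ (a,b) * (w a b)^2)
      = G U - 1/2 * (\<Sum>a<d1. \<Sum>b<d2. D $$ (a,b) * U $$ (a,b) * (w a b)^2)"
    by (simp add: sum_negf)
  also have "\<dots> \<le> G U"
  proof -
    have "0 \<le> (\<Sum>a<d1. \<Sum>b<d2. D $$ (a,b) * U $$ (a,b) * (w a b)^2)"
      using Dp Ue by (intro sum_nonneg mult_nonneg_nonneg) (auto intro: less_imp_le)
    thus ?thesis by simp
  qed
  finally show ?thesis using nn unfolding U'_def by simp
qed




lemma sum_prod_set: "(\<Sum>e\<in>A\<times>B. g e) = (\<Sum>a\<in>A. \<Sum>b\<in>B. g (a,b))"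
  by (simp add: sum.cartesian_product)

lemma sum4: "(\<Sum>a<d1. \<Sum>b<d2. \<Sum>c<d1. \<Sum>d<d2. g a b c d) =
   (\<Sum>e\<in>{..<d1}\<times>{..<d2::nat}. \<Sum>f\<in>{..<d1::nat}\<times>{..<d2}. g (fst e) (snd e) (fst f) (snd f))"
  by (simp add: sum_prod_set)

lemma quad_sym:
  fixes T :: "'a \<Rightarrow> 'a \<Rightarrow> real"
  assumes "\<And>e f. e \<in> S \<Longrightarrow> f \<in> S \<Longrightarrow> T e f \<ge> 0" "\<And>e f. e \<in> S \<Longrightarrow> f \<in> S \<Longrightarrow> T e f = T f e"
  shows "(\<Sum>e\<in>S. \<Sum>f\<in>S. T e f * x f * x e) \<le> (\<Sum>e\<in>S. \<Sum>f\<in>S. T e f * (x e)^2)"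
proof -
  have "(\<Sum>e\<in>S. \<Sum>f\<in>S. T e f * x f * x e) \<le> (\<Sum>e\<in>S. \<Sum>f\<in>S. T e f * ((x e)^2 + (x f)^2) / 2)"
  proof (intro sum_mono)
    fix e f assume "e \<in> S" "f \<in> S"
    hence T: "T e f \<ge> 0" using assms by auto
    have h: "(x e - x f)^2 = (x e)^2 + (x f)^2 - 2*(x e * x f)" by (simp add: power2_diff)
    have h2: "0 \<le> (x e - x f)^2" by simp
    have "x f * x e \<le> ((x e)^2 + (x f)^2) / 2" using h h2 by (simp add: mult.commute)
    hence "T e f * (x f * x e) \<le> T e f * (((x e)^2 + (x f)^2) / 2)" by (rule mult_left_mono[OF _ T])
    thus "T e f * x f * x e \<le> T e f * ((x e)^2 + (x f)^2) / 2" by (simp add: mult.assoc)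
  qed
  also have "\<dots> = ((\<Sum>e\<in>S. \<Sum>f\<in>S. T e f * (x e)^2) + (\<Sum>e\<in>S. \<Sum>f\<in>S. T e f * (x f)^2)) / 2"
    by (simp add: distrib_left add_divide_distrib sum.distrib sum_divide_distrib[symmetric])
  also have "(\<Sum>e\<in>S. \<Sum>f\<in>S. T e f * (x f)^2) = (\<Sum>f\<in>S. \<Sum>e\<in>S. T e f * (x f)^2)" by (rule sum.swap)
  also have "\<dots> = (\<Sum>f\<in>S. \<Sum>e\<in>S. T f e * (x f)^2)" using assms(2) by (auto intro!: sum.cong)
  finally show ?thesis by simp
qed

lemma dom_PXW:
  assumes P: "P \<in> carrier_mat d1 d1" and W: "W \<in> carrier_mat d2 d2"
    and U: "U \<in> carrier_mat d1 d2" and X: "X \<in> carrier_mat d1 d2"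
    and sP: "\<And>a c. a < d1 \<Longrightarrow> c < d1 \<Longrightarrow> P $$ (a,c) = P $$ (c,a)"
    and sW: "\<And>a c. a < d2 \<Longrightarrow> c < d2 \<Longrightarrow> W $$ (a,c) = W $$ (c,a)"
    and nP: "nonneg_mat P" and nW: "nonneg_mat W" and nU: "nonneg_mat U"
    and Xe: "\<And>a b. a < d1 \<Longrightarrow> b < d2 \<Longrightarrow> X $$ (a,b) = U $$ (a,b) * w a b"
  shows "ip (P * X * W) X \<le> (\<Sum>a<d1. \<Sum>b<d2. (P * U * W) $$ (a,b) * U $$ (a,b) * (w a b)^2)"
proof -
  define T where "T a b c d = P $$ (a,c) * W $$ (d,b) * U $$ (c,d) * U $$ (a,b)" for a b c d
  have e1: "(P * N * W) $$ (a,b) = (\<Sum>c<d1. \<Sum>d<d2. P $$ (a,c) * N $$ (c,d) * W $$ (d,b))"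
    if "a < d1" "b < d2" "N \<in> carrier_mat d1 d2" for a b N
  proof -
    have "(P * N * W) $$ (a,b) = (\<Sum>d<d2. (\<Sum>c<d1. P $$ (a,c) * N $$ (c,d)) * W $$ (d,b))"
      using that P W by (auto simp: mult_entry[of _ d1 d2 W d2] mult_entry[OF P] simp del: index_mult_mat(1) assoc_mult_mat intro!: sum.cong)
    also have "\<dots> = (\<Sum>d<d2. \<Sum>c<d1. P $$ (a,c) * N $$ (c,d) * W $$ (d,b))"
      by (simp add: sum_distrib_right)
    also have "\<dots> = (\<Sum>c<d1. \<Sum>d<d2. P $$ (a,c) * N $$ (c,d) * W $$ (d,b))" by (rule sum.swap)
    finally show ?thesis .
  qed
  have "ip (P * X * W) X = (\<Sum>a<d1. \<Sum>b<d2. \<Sum>c<d1. \<Sum>d<d2. T a b c d * w c d * w a b)"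
    unfolding ip_def using P W X
    by (auto simp: e1[OF _ _ X] Xe T_def sum_distrib_right sum_distrib_left mult_ac simp del: index_mult_mat(1) assoc_mult_mat intro!: sum.cong)
  also have "\<dots> = (\<Sum>e\<in>{..<d1}\<times>{..<d2}. \<Sum>f\<in>{..<d1}\<times>{..<d2}.
       (\<lambda>e f. T (fst e) (snd e) (fst f) (snd f)) e f * (\<lambda>e. w (fst e) (snd e)) f * (\<lambda>e. w (fst e) (snd e)) e)"
    by (simp add: sum4)
  also have "\<dots> \<le> (\<Sum>e\<in>{..<d1}\<times>{..<d2}. \<Sum>f\<in>{..<d1}\<times>{..<d2}.
       (\<lambda>e f. T (fst e) (snd e) (fst f) (snd f)) e f * ((\<lambda>e. w (fst e) (snd e)) e)^2)"
  proof (rule quad_sym)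
    fix e f assume ef: "e \<in> {..<d1}\<times>{..<d2::nat}" "f \<in> {..<d1}\<times>{..<d2::nat}"
    show "0 \<le> T (fst e) (snd e) (fst f) (snd f)" unfolding T_def
      using nP nW nU P W U ef unfolding nonneg_mat_def by (auto intro!: mult_nonneg_nonneg)
    show "T (fst e) (snd e) (fst f) (snd f) = T (fst f) (snd f) (fst e) (snd e)" unfolding T_def
      using sP sW ef by auto
  qed
  also have "\<dots> = (\<Sum>a<d1. \<Sum>b<d2. \<Sum>c<d1. \<Sum>d<d2. T a b c d * (w a b)^2)"
    by (simp add: sum4)
  also have "\<dots> = (\<Sum>a<d1. \<Sum>b<d2. (P * U * W) $$ (a,b) * U $$ (a,b) * (w a b)^2)"
    using P W U by (auto simp: e1[OF _ _ U] T_def sum_distrib_right sum_distrib_left mult_ac simp del: index_mult_mat(1) assoc_mult_mat intro!: sum.cong)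
  finally show ?thesis .
qed




lemma TA:
  assumes A: "A \<in> carrier_mat k m" and E: "E \<in> carrier_mat m n" and D: "\<Delta> \<in> carrier_mat m r" and V: "V \<in> carrier_mat n r"
  shows "ip (A * E) (A * (\<Delta> * transpose_mat V)) = ip (transpose_mat A * A * E * V) \<Delta>"
proof -
  have "ip (A * E) (A * (\<Delta> * transpose_mat V)) = ip (transpose_mat A * (A * E)) (\<Delta> * transpose_mat V)"
    by (rule ip_adjL[OF A _ ]) (use A E D V in auto)
  also have "\<dots> = ip (transpose_mat A * (A * E) * V) \<Delta>"
    by (subst ip_adjR[OF D, of _ n]) (use A E D V in auto)
  also have "transpose_mat A * (A * E) = transpose_mat A * A * E" using A E by simp
  finally show ?thesis .
qed

lemma QA:
  assumes A: "A \<in> carrier_mat k m" and E: "E \<in> carrier_mat m n" and D: "\<Delta> \<in> carrier_mat m r" and V: "V \<in> carrier_mat n r"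
  shows "ip (A * (E - \<Delta> * transpose_mat V)) (A * (E - \<Delta> * transpose_mat V)) =
     ip (A * E) (A * E) - 2 * ip (transpose_mat A * A * E * V) \<Delta> + ip (transpose_mat A * A * \<Delta> * transpose_mat V * V) \<Delta>"
proof -
  have DV: "\<Delta> * transpose_mat V \<in> carrier_mat m n" using D V by auto
  have "A * (E - \<Delta> * transpose_mat V) = A * E - A * (\<Delta> * transpose_mat V)"
    by (rule mult_minus_distrib_mat[OF A E DV])
  moreover have "ip (A * (\<Delta> * transpose_mat V)) (A * (\<Delta> * transpose_mat V)) = ip (transpose_mat A * A * \<Delta> * transpose_mat V * V) \<Delta>"
  proof -
    have "transpose_mat A * A * (\<Delta> * transpose_mat V) = transpose_mat A * A * \<Delta> * transpose_mat V"
      using assoc_mult_mat[of "transpose_mat A * A" m m \<Delta> r "transpose_mat V" n] A D V by auto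
    thus ?thesis using TA[OF A DV D V] by simp
  qed
  ultimately show ?thesis using ip_sq[of "A * E" k n "A * (\<Delta> * transpose_mat V)"] TA[OF A E D V] A E DV by simp
qed

lemma TB:
  assumes E: "E \<in> carrier_mat m n" and B: "B \<in> carrier_mat n l" and D: "\<Delta> \<in> carrier_mat m r" and V: "V \<in> carrier_mat n r"
  shows "ip (E * B) (\<Delta> * transpose_mat V * B) = ip (E * B * transpose_mat B * V) \<Delta>"
proof -
  have "ip (E * B) (\<Delta> * transpose_mat V * B) = ip (E * B * transpose_mat B) (\<Delta> * transpose_mat V)"
    by (rule ip_adjR[of _ m n]) (use B E D V in auto)
  also have "\<dots> = ip (E * B * transpose_mat B * V) \<Delta>"
    by (subst ip_adjR[OF D, of _ n]) (use B E D V in auto)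
  finally show ?thesis .
qed

lemma QB:
  assumes E: "E \<in> carrier_mat m n" and B: "B \<in> carrier_mat n l" and D: "\<Delta> \<in> carrier_mat m r" and V: "V \<in> carrier_mat n r"
  shows "ip ((E - \<Delta> * transpose_mat V) * B) ((E - \<Delta> * transpose_mat V) * B) =
     ip (E * B) (E * B) - 2 * ip (E * B * transpose_mat B * V) \<Delta> + ip (\<Delta> * transpose_mat V * B * transpose_mat B * V) \<Delta>"
proof -
  have DV: "\<Delta> * transpose_mat V \<in> carrier_mat m n" using D V by auto
  have "(E - \<Delta> * transpose_mat V) * B = E * B - \<Delta> * transpose_mat V * B"
    by (rule minus_mult_distrib_mat[OF E DV B])
  thus ?thesis using ip_sq[of "E * B" m l "\<Delta> * transpose_mat V * B"] TB[OF E B D V] TB[OF DV B D V] E DV B by simp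
qed

lemma TC:
  assumes A: "A \<in> carrier_mat k m" and E: "E \<in> carrier_mat m n" and D: "\<Delta> \<in> carrier_mat n r" and U: "U \<in> carrier_mat m r"
  shows "ip (A * E) (A * (U * transpose_mat \<Delta>)) = ip (transpose_mat E * transpose_mat A * A * U) \<Delta>"
proof -
  have "ip (A * E) (A * (U * transpose_mat \<Delta>)) = ip (transpose_mat A * (A * E)) (U * transpose_mat \<Delta>)"
    by (rule ip_adjL[OF A _ ]) (use A E D U in auto)
  also have "\<dots> = ip (transpose_mat U * (transpose_mat A * (A * E))) (transpose_mat \<Delta>)"
    by (rule ip_adjL[OF U]) (use A E D U in auto)
  also have "\<dots> = ip (transpose_mat (transpose_mat U * (transpose_mat A * (A * E)))) \<Delta>"
    by (rule ip_transpose[of _ r n]) (use A E D U in auto)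
  also have "transpose_mat (transpose_mat U * (transpose_mat A * (A * E))) = transpose_mat E * transpose_mat A * A * U"
  proof -
    have AE: "A * E \<in> carrier_mat k n" using A E by auto
    have Z: "transpose_mat A * (A * E) \<in> carrier_mat m n" using A E by auto
    have "transpose_mat (transpose_mat U * (transpose_mat A * (A * E))) = transpose_mat (transpose_mat A * (A * E)) * U"
      using transpose_mult[of "transpose_mat U" r m "transpose_mat A * (A * E)" n] U Z by simp
    also have "transpose_mat (transpose_mat A * (A * E)) = transpose_mat (A * E) * A"
      using transpose_mult[of "transpose_mat A" m k "A * E" n] A AE by simp
    also have "transpose_mat (A * E) = transpose_mat E * transpose_mat A"
      using transpose_mult[OF A E] .
    finally show ?thesis using A E U by simp
  qed
  finally show ?thesis .
qed

lemma QC: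
  assumes A: "A \<in> carrier_mat k m" and E: "E \<in> carrier_mat m n" and D: "\<Delta> \<in> carrier_mat n r" and U: "U \<in> carrier_mat m r"
  shows "ip (A * (E - U * transpose_mat \<Delta>)) (A * (E - U * transpose_mat \<Delta>)) =
     ip (A * E) (A * E) - 2 * ip (transpose_mat E * transpose_mat A * A * U) \<Delta> + ip (\<Delta> * transpose_mat U * transpose_mat A * A * U) \<Delta>"
proof -
  have UD: "U * transpose_mat \<Delta> \<in> carrier_mat m n" using D U by auto
  have "A * (E - U * transpose_mat \<Delta>) = A * E - A * (U * transpose_mat \<Delta>)"
    by (rule mult_minus_distrib_mat[OF A E UD])
  moreover have "transpose_mat (U * transpose_mat \<Delta>) = \<Delta> * transpose_mat U"
    using transpose_mult[of U m r "transpose_mat \<Delta>" n] U D by simp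
  moreover have "ip (A * (U * transpose_mat \<Delta>)) (A * (U * transpose_mat \<Delta>)) = ip (transpose_mat (U * transpose_mat \<Delta>) * transpose_mat A * A * U) \<Delta>"
    using TC[OF A UD D U] .
  ultimately show ?thesis using ip_sq[of "A * E" k n "A * (U * transpose_mat \<Delta>)"] TC[OF A E D U] A E UD U D by simp
qed

lemma TD:
  assumes E: "E \<in> carrier_mat m n" and B: "B \<in> carrier_mat n l" and D: "\<Delta> \<in> carrier_mat n r" and U: "U \<in> carrier_mat m r"
  shows "ip (E * B) (U * transpose_mat \<Delta> * B) = ip (B * transpose_mat B * transpose_mat E * U) \<Delta>"
proof -
  have "ip (E * B) (U * transpose_mat \<Delta> * B) = ip (E * B * transpose_mat B) (U * transpose_mat \<Delta>)"
    by (rule ip_adjR[of _ m n]) (use B E D U in auto)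
  also have "\<dots> = ip (transpose_mat U * (E * B * transpose_mat B)) (transpose_mat \<Delta>)"
    by (rule ip_adjL[OF U]) (use B E D U in auto)
  also have "\<dots> = ip (transpose_mat (transpose_mat U * (E * B * transpose_mat B))) \<Delta>"
    by (rule ip_transpose[of _ r n]) (use B E D U in auto)
  also have "transpose_mat (transpose_mat U * (E * B * transpose_mat B)) = B * transpose_mat B * transpose_mat E * U"
  proof -
    have EB: "E * B \<in> carrier_mat m l" using B E by auto
    have Z: "E * B * transpose_mat B \<in> carrier_mat m n" using B E by auto
    have "transpose_mat (transpose_mat U * (E * B * transpose_mat B)) = transpose_mat (E * B * transpose_mat B) * U"
      using transpose_mult[of "transpose_mat U" r m "E * B * transpose_mat B" n] U Z by simp
    also have "transpose_mat (E * B * transpose_mat B) = B * transpose_mat (E * B)"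
      using transpose_mult[of "E * B" m l "transpose_mat B" n] B EB by simp
    also have "transpose_mat (E * B) = transpose_mat B * transpose_mat E"
      using transpose_mult[OF E B] .
    finally show ?thesis using B E U by simp
  qed
  finally show ?thesis .
qed

lemma QD:
  assumes E: "E \<in> carrier_mat m n" and B: "B \<in> carrier_mat n l" and D: "\<Delta> \<in> carrier_mat n r" and U: "U \<in> carrier_mat m r"
  shows "ip ((E - U * transpose_mat \<Delta>) * B) ((E - U * transpose_mat \<Delta>) * B) =
     ip (E * B) (E * B) - 2 * ip (B * transpose_mat B * transpose_mat E * U) \<Delta> + ip (B * transpose_mat B * \<Delta> * transpose_mat U * U) \<Delta>"
proof -
  have UD: "U * transpose_mat \<Delta> \<in> carrier_mat m n" using D U by auto
  have "(E - U * transpose_mat \<Delta>) * B = E * B - U * transpose_mat \<Delta> * B"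
    by (rule minus_mult_distrib_mat[OF E UD B])
  moreover have "transpose_mat (U * transpose_mat \<Delta>) = \<Delta> * transpose_mat U"
    using transpose_mult[of U m r "transpose_mat \<Delta>" n] U D by simp
  moreover have "ip (U * transpose_mat \<Delta> * B) (U * transpose_mat \<Delta> * B) = ip (B * transpose_mat B * transpose_mat (U * transpose_mat \<Delta>) * U) \<Delta>"
    using TD[OF UD B D U] .
  moreover have "B * transpose_mat B * (\<Delta> * transpose_mat U) = B * transpose_mat B * \<Delta> * transpose_mat U"
      using assoc_mult_mat[of "B * transpose_mat B" n n \<Delta> r "transpose_mat U" m] B D U by auto
  ultimately show ?thesis using ip_sq[of "E * B" m l "U * transpose_mat \<Delta> * B"] TD[OF E B D U] E UD U D B by simp
qed




lemma sym_TM: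
  fixes M :: "real mat"
  assumes "M \<in> carrier_mat q d" "a < d" "c < d"
  shows "(transpose_mat M * M) $$ (a,c) = (transpose_mat M * M) $$ (c,a)"
proof -
  have "(transpose_mat M * M) $$ (a,c) = (\<Sum>k<q. M $$ (k,a) * M $$ (k,c))"
    using assms by (simp add: mult_entry[of "transpose_mat M" d q M d] del: index_mult_mat(1))
  also have "\<dots> = (\<Sum>k<q. M $$ (k,c) * M $$ (k,a))" by (rule sum.cong[OF refl]) (rule mult.commute)
  also have "\<dots> = (transpose_mat M * M) $$ (c,a)"
    using assms by (simp add: mult_entry[of "transpose_mat M" d q M d] del: index_mult_mat(1))
  finally show ?thesis .
qed

lemma sym_MT:
  fixes M :: "real mat"
  assumes "M \<in> carrier_mat d q" "a < d" "c < d"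
  shows "(M * transpose_mat M) $$ (a,c) = (M * transpose_mat M) $$ (c,a)"
proof -
  have "(M * transpose_mat M) $$ (a,c) = (\<Sum>k<q. M $$ (a,k) * M $$ (c,k))"
    using assms by (simp add: mult_entry[of M d q "transpose_mat M" d] del: index_mult_mat(1))
  also have "\<dots> = (\<Sum>k<q. M $$ (c,k) * M $$ (a,k))" by (rule sum.cong[OF refl]) (rule mult.commute)
  also have "\<dots> = (M * transpose_mat M) $$ (c,a)"
    using assms by (simp add: mult_entry[of M d q "transpose_mat M" d] del: index_mult_mat(1))
  finally show ?thesis .
qed

lemma sym_msum_TM:
  fixes M :: "nat \<Rightarrow> real mat"
  assumes "\<And>i. i < N \<Longrightarrow> M i \<in> carrier_mat (k i) d"
  shows "transpose_mat (msum d d N (\<lambda>i. transpose_mat (M i) * M i)) = msum d d N (\<lambda>i. transpose_mat (M i) * M i)"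
  by (rule eq_matI) (auto intro!: sum.cong simp: sym_TM[OF assms])

lemma sym_msum_MT:
  fixes M :: "nat \<Rightarrow> real mat"
  assumes "\<And>i. i < N \<Longrightarrow> M i \<in> carrier_mat d (k i)"
  shows "transpose_mat (msum d d N (\<lambda>i. M i * transpose_mat (M i))) = msum d d N (\<lambda>i. M i * transpose_mat (M i))"
  by (rule eq_matI) (auto intro!: sum.cong simp: sym_MT[OF assms])

lemma sym_TZM:
  fixes M Z :: "real mat"
  assumes M: "M \<in> carrier_mat p q" and Z: "Z \<in> carrier_mat p p" and s: "transpose_mat Z = Z"
  shows "transpose_mat (transpose_mat M * Z * M) = transpose_mat M * Z * M"
proof -
  have "transpose_mat (transpose_mat M * Z * M) = transpose_mat M * transpose_mat (transpose_mat M * Z)"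
    using transpose_mult[of "transpose_mat M * Z" q p M q] M Z by auto
  also have "transpose_mat (transpose_mat M * Z) = transpose_mat Z * M"
    using transpose_mult[of "transpose_mat M" q p Z p] M Z by auto
  finally show ?thesis using s M Z by (metis assoc_mult_mat transpose_carrier_mat)
qed

lemma sym_entry: "transpose_mat Z = Z \<Longrightarrow> Z \<in> carrier_mat p p \<Longrightarrow> a < p \<Longrightarrow> c < p \<Longrightarrow> Z $$ (a,c) = Z $$ (c,a)"
  by (metis carrier_matD index_transpose_mat(1))

lemma minus_plus_mat: "X \<in> carrier_mat p q \<Longrightarrow> Y \<in> carrier_mat p q \<Longrightarrow> Z \<in> carrier_mat p q \<Longrightarrow>
   X - (Y + Z) = X - Y - (Z :: real mat)"
  by (rule eq_matI) auto


lemma nonneg_add: "nonneg_mat M \<Longrightarrow> nonneg_mat N \<Longrightarrow> M \<in> carrier_mat p q \<Longrightarrow> N \<in> carrier_mat p q \<Longrightarrow> nonneg_mat (M + N)"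
  unfolding nonneg_mat_def by auto

lemma sym_TM1: fixes V :: "real mat" assumes "V \<in> carrier_mat n r" shows "transpose_mat (transpose_mat V * V) = transpose_mat V * V"
  using transpose_mult[of "transpose_mat V" r n V r] assms by simp

lemma msum_transpose:
  assumes "\<And>i. i < N \<Longrightarrow> f i \<in> carrier_mat d1 d2"
  shows "msum d2 d1 N (\<lambda>i. transpose_mat (f i)) = transpose_mat (msum d1 d2 N f)"
proof (rule eq_matI)
  fix a b assume ab: "a < dim_row (transpose_mat (msum d1 d2 N f))" "b < dim_col (transpose_mat (msum d1 d2 N f))"
  have "(\<Sum>i<N. transpose_mat (f i) $$ (a,b)) = (\<Sum>i<N. f i $$ (b,a))"
  proof (rule sum.cong[OF refl])
    fix i assume "i \<in> {..<N}" hence "f i \<in> carrier_mat d1 d2" using assms by auto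
    thus "transpose_mat (f i) $$ (a,b) = f i $$ (b,a)" using ab by auto
  qed
  thus "msum d2 d1 N (\<lambda>i. transpose_mat (f i)) $$ (a,b) = transpose_mat (msum d1 d2 N f) $$ (a,b)" using ab by auto
qed auto

context
  fixes s t m n r :: nat
    and XA XB A B :: "nat \<Rightarrow> real mat"
    and k l :: "nat \<Rightarrow> nat"
    and U V :: "real mat"
  assumes XA: "\<And>i. i < s \<Longrightarrow> XA i \<in> carrier_mat m n"
    and XB: "\<And>j. j < t \<Longrightarrow> XB j \<in> carrier_mat m n"
    and A: "\<And>i. i < s \<Longrightarrow> A i \<in> carrier_mat (k i) m"
    and B: "\<And>j. j < t \<Longrightarrow> B j \<in> carrier_mat n (l j)"
    and U: "U \<in> carrier_mat m r"
    and V: "V \<in> carrier_mat n r"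
    and nnU: "nonneg_mat U"
    and nnV: "nonneg_mat V"
    and nnAA: "nonneg_mat (msum m m s (\<lambda>i. transpose_mat (A i) * A i))"
    and nnBB: "nonneg_mat (msum n n t (\<lambda>j. B j * transpose_mat (B j)))"
    and nnAAX: "nonneg_mat (msum m n s (\<lambda>i. transpose_mat (A i) * A i * XA i))"
    and nnXBB: "nonneg_mat (msum m n t (\<lambda>j. XB j * B j * transpose_mat (B j)))"
begin

definition "PP = msum m m s (\<lambda>i. transpose_mat (A i) * A i)"
definition "QQ = msum n n t (\<lambda>j. B j * transpose_mat (B j))"

lemma ATA_c: "i < s \<Longrightarrow> transpose_mat (A i) * A i \<in> carrier_mat m m" using A[of i] by simp
lemma BBT_c: "j < t \<Longrightarrow> B j * transpose_mat (B j) \<in> carrier_mat n n" using B[of j] by simp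

lemma PPc: "PP \<in> carrier_mat m m" unfolding PP_def by simp
lemma QQc: "QQ \<in> carrier_mat n n" unfolding QQ_def by simp
lemma PPs: "transpose_mat PP = PP" unfolding PP_def by (rule sym_msum_TM[OF A])
lemma QQs: "transpose_mat QQ = QQ" unfolding QQ_def by (rule sym_msum_MT[OF B])

lemma U_forms:
  assumes Y: "Y \<in> carrier_mat m r"
  shows "msum m r s (\<lambda>i. transpose_mat (A i) * A i * Y * transpose_mat V * V) = PP * Y * (transpose_mat V * V)"
    and "msum m r t (\<lambda>j. Y * transpose_mat V * B j * transpose_mat (B j) * V) = Y * (transpose_mat V * QQ * V)"
proof -
  have Vt: "transpose_mat V \<in> carrier_mat r n" using V by simp
  have W: "transpose_mat V * V \<in> carrier_mat r r" using V by simp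
  have "msum m r s (\<lambda>i. transpose_mat (A i) * A i * Y * transpose_mat V * V)
      = msum m r s (\<lambda>i. (transpose_mat (A i) * A i) * (Y * (transpose_mat V * V)))"
  proof (rule msum_cong)
    fix i assume i: "i < s"
    have X1: "transpose_mat (A i) * A i \<in> carrier_mat m m" using A[OF i] by simp
    have X1Y: "transpose_mat (A i) * A i * Y \<in> carrier_mat m r" using X1 Y by simp
    show "transpose_mat (A i) * A i * Y * transpose_mat V * V = (transpose_mat (A i) * A i) * (Y * (transpose_mat V * V))"
      by (simp only: assoc_mult_mat[OF X1Y Vt V] assoc_mult_mat[OF X1 Y W])
  qed
  also have "\<dots> = PP * (Y * (transpose_mat V * V))" unfolding PP_def
    by (rule msum_mult_right) (use ATA_c Y V in auto)
  also have "\<dots> = PP * Y * (transpose_mat V * V)" using assoc_mult_mat[OF PPc Y W] by simp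
  finally show "msum m r s (\<lambda>i. transpose_mat (A i) * A i * Y * transpose_mat V * V) = PP * Y * (transpose_mat V * V)" .
  have YVt: "Y * transpose_mat V \<in> carrier_mat m n" using Y V by simp
  have "msum m r t (\<lambda>j. Y * transpose_mat V * B j * transpose_mat (B j) * V)
      = msum m r t (\<lambda>j. (Y * transpose_mat V) * (B j * transpose_mat (B j) * V))"
  proof (rule msum_cong)
    fix j assume j: "j < t"
    have Bj: "B j \<in> carrier_mat n (l j)" "transpose_mat (B j) \<in> carrier_mat (l j) n" using B[OF j] by auto
    have c1: "Y * transpose_mat V * B j \<in> carrier_mat m (l j)" using YVt Bj by simp
    have c2: "B j * transpose_mat (B j) \<in> carrier_mat n n" using Bj by simp
    show "Y * transpose_mat V * B j * transpose_mat (B j) * V = (Y * transpose_mat V) * (B j * transpose_mat (B j) * V)"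
      by (simp only: assoc_mult_mat[OF c1 Bj(2) V] assoc_mult_mat[OF YVt Bj(1), of "transpose_mat (B j) * V" r]
           mult_carrier_mat[OF Bj(2) V] assoc_mult_mat[OF Bj V, symmetric] simp_thms)
  qed
  also have "\<dots> = (Y * transpose_mat V) * msum n r t (\<lambda>j. B j * transpose_mat (B j) * V)"
  proof (rule msum_mult_left)
    fix j assume "j < t" thus "B j * transpose_mat (B j) * V \<in> carrier_mat n r" using BBT_c V by (meson mult_carrier_mat)
  qed (use Y V in auto)
  also have "msum n r t (\<lambda>j. B j * transpose_mat (B j) * V) = QQ * V" unfolding QQ_def
    by (rule msum_mult_right) (use BBT_c V in auto)
  also have "(Y * transpose_mat V) * (QQ * V) = Y * (transpose_mat V * QQ * V)"
  proof -
    have "(Y * transpose_mat V) * (QQ * V) = Y * (transpose_mat V * (QQ * V))"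
      using assoc_mult_mat[OF Y Vt, of "QQ * V" r] QQc V by simp
    also have "transpose_mat V * (QQ * V) = transpose_mat V * QQ * V"
      using assoc_mult_mat[OF Vt QQc V] by simp
    finally show ?thesis .
  qed
  finally show "msum m r t (\<lambda>j. Y * transpose_mat V * B j * transpose_mat (B j) * V) = Y * (transpose_mat V * QQ * V)" .
qed

lemma U_expand:
  assumes D: "\<Delta> \<in> carrier_mat m r"
  shows "objF s t XA XB A B (U + \<Delta>) V = objF s t XA XB A B U V
     + ip ((msum m r s (\<lambda>i. transpose_mat (A i) * A i * U * transpose_mat V * V)
                 + msum m r t (\<lambda>j. U * transpose_mat V * B j * transpose_mat (B j) * V))
           - (msum m r s (\<lambda>i. transpose_mat (A i) * A i * XA i * V)
                 + msum m r t (\<lambda>j. XB j * B j * transpose_mat (B j) * V))) \<Delta>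
     + 1/2 * ip (PP * \<Delta> * (transpose_mat V * V) + \<Delta> * (transpose_mat V * QQ * V)) \<Delta>"
proof -
  have Vt: "transpose_mat V \<in> carrier_mat r n" using V by simp
  have UVt: "U * transpose_mat V \<in> carrier_mat m n" using U V by simp
  have DVt: "\<Delta> * transpose_mat V \<in> carrier_mat m n" using D V by simp
  have UD: "(U + \<Delta>) * transpose_mat V = U * transpose_mat V + \<Delta> * transpose_mat V"
    by (rule add_mult_distrib_mat[OF U D Vt])
  define NA where "NA = msum m r s (\<lambda>i. transpose_mat (A i) * A i * XA i * V)"
  define NB where "NB = msum m r t (\<lambda>j. XB j * B j * transpose_mat (B j) * V)"
  define DA where "DA = msum m r s (\<lambda>i. transpose_mat (A i) * A i * U * transpose_mat V * V)"
  define DB where "DB = msum m r t (\<lambda>j. U * transpose_mat V * B j * transpose_mat (B j) * V)"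
  define HA where "HA = msum m r s (\<lambda>i. transpose_mat (A i) * A i * \<Delta> * transpose_mat V * V)"
  define HB where "HB = msum m r t (\<lambda>j. \<Delta> * transpose_mat V * B j * transpose_mat (B j) * V)"
  define fA where "fA i = (frob (A i * (XA i - U * transpose_mat V)))^2" for i
  define fB where "fB j = (frob ((XB j - U * transpose_mat V) * B j))^2" for j
  have termA: "(frob (A i * (XA i - (U + \<Delta>) * transpose_mat V)))^2 = fA i
     - 2 * (ip (transpose_mat (A i) * A i * XA i * V) \<Delta> - ip (transpose_mat (A i) * A i * U * transpose_mat V * V) \<Delta>)
     + ip (transpose_mat (A i) * A i * \<Delta> * transpose_mat V * V) \<Delta>" if i: "i < s" for i
  proof -
    have Ai: "A i \<in> carrier_mat (k i) m" and Xi: "XA i \<in> carrier_mat m n" using A XA i by auto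
    have E: "XA i - U * transpose_mat V \<in> carrier_mat m n" by (rule minus_carrier_mat[OF UVt])
    have X1: "transpose_mat (A i) * A i \<in> carrier_mat m m" using Ai by simp
    have "XA i - (U + \<Delta>) * transpose_mat V = (XA i - U * transpose_mat V) - \<Delta> * transpose_mat V"
      unfolding UD by (rule minus_plus_mat[OF Xi UVt DVt])
    hence "(frob (A i * (XA i - (U + \<Delta>) * transpose_mat V)))^2 = fA i
       - 2 * ip (transpose_mat (A i) * A i * (XA i - U * transpose_mat V) * V) \<Delta>
       + ip (transpose_mat (A i) * A i * \<Delta> * transpose_mat V * V) \<Delta>"
      unfolding fA_def frob_sq using QA[OF Ai E D V] by simp
    moreover have "transpose_mat (A i) * A i * (XA i - U * transpose_mat V) * V
        = transpose_mat (A i) * A i * XA i * V - transpose_mat (A i) * A i * U * transpose_mat V * V"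
    proof -
      have "transpose_mat (A i) * A i * (XA i - U * transpose_mat V) = transpose_mat (A i) * A i * XA i - transpose_mat (A i) * A i * (U * transpose_mat V)"
        by (rule mult_minus_distrib_mat[OF X1 Xi UVt])
      also have "transpose_mat (A i) * A i * (U * transpose_mat V) = transpose_mat (A i) * A i * U * transpose_mat V"
        using assoc_mult_mat[OF X1 U Vt] by simp
      finally have "transpose_mat (A i) * A i * (XA i - U * transpose_mat V) * V = 
         (transpose_mat (A i) * A i * XA i - transpose_mat (A i) * A i * U * transpose_mat V) * V" by simp
      also have "\<dots> = transpose_mat (A i) * A i * XA i * V - transpose_mat (A i) * A i * U * transpose_mat V * V"
        by (rule minus_mult_distrib_mat[where nr=m and n=n and nc=r]) (meson X1 Xi U Vt V mult_carrier_mat)+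
      finally show ?thesis .
    qed
    moreover have "ip (transpose_mat (A i) * A i * XA i * V - transpose_mat (A i) * A i * U * transpose_mat V * V) \<Delta>
       = ip (transpose_mat (A i) * A i * XA i * V) \<Delta> - ip (transpose_mat (A i) * A i * U * transpose_mat V * V) \<Delta>"
      by (rule ip_minus_left[of _ m r]) (meson X1 Xi U Vt V mult_carrier_mat)+
    ultimately show ?thesis by simp
  qed
  have termB: "(frob ((XB j - (U + \<Delta>) * transpose_mat V) * B j))^2 = fB j
     - 2 * (ip (XB j * B j * transpose_mat (B j) * V) \<Delta> - ip (U * transpose_mat V * B j * transpose_mat (B j) * V) \<Delta>)
     + ip (\<Delta> * transpose_mat V * B j * transpose_mat (B j) * V) \<Delta>" if j: "j < t" for j
  proof -
    have Bj: "B j \<in> carrier_mat n (l j)" and Xj: "XB j \<in> carrier_mat m n" using B XB j by auto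
    have Bt: "transpose_mat (B j) \<in> carrier_mat (l j) n" using Bj by simp
    have E: "XB j - U * transpose_mat V \<in> carrier_mat m n" by (rule minus_carrier_mat[OF UVt])
    have "XB j - (U + \<Delta>) * transpose_mat V = (XB j - U * transpose_mat V) - \<Delta> * transpose_mat V"
      unfolding UD by (rule minus_plus_mat[OF Xj UVt DVt])
    hence "(frob ((XB j - (U + \<Delta>) * transpose_mat V) * B j))^2 = fB j
       - 2 * ip ((XB j - U * transpose_mat V) * B j * transpose_mat (B j) * V) \<Delta>
       + ip (\<Delta> * transpose_mat V * B j * transpose_mat (B j) * V) \<Delta>"
      unfolding fB_def frob_sq using QB[OF E Bj D V] by simp
    moreover have "(XB j - U * transpose_mat V) * B j * transpose_mat (B j) * V
        = XB j * B j * transpose_mat (B j) * V - U * transpose_mat V * B j * transpose_mat (B j) * V"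
    proof -
      have "(XB j - U * transpose_mat V) * B j = XB j * B j - U * transpose_mat V * B j"
        by (rule minus_mult_distrib_mat[OF Xj UVt Bj])
      hence "(XB j - U * transpose_mat V) * B j * transpose_mat (B j) = XB j * B j * transpose_mat (B j) - U * transpose_mat V * B j * transpose_mat (B j)"
        using minus_mult_distrib_mat[of "XB j * B j" m "l j" "U * transpose_mat V * B j" "transpose_mat (B j)" n] Xj UVt Bj Bt by simp
      hence "(XB j - U * transpose_mat V) * B j * transpose_mat (B j) * V = (XB j * B j * transpose_mat (B j) - U * transpose_mat V * B j * transpose_mat (B j)) * V"
        by simp
      also have "\<dots> = XB j * B j * transpose_mat (B j) * V - U * transpose_mat V * B j * transpose_mat (B j) * V"
        by (rule minus_mult_distrib_mat[where nr=m and n=n and nc=r]) (meson Xj UVt Bj Bt V mult_carrier_mat)+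
      finally show ?thesis .
    qed
    moreover have "ip (XB j * B j * transpose_mat (B j) * V - U * transpose_mat V * B j * transpose_mat (B j) * V) \<Delta>
       = ip (XB j * B j * transpose_mat (B j) * V) \<Delta> - ip (U * transpose_mat V * B j * transpose_mat (B j) * V) \<Delta>"
      by (rule ip_minus_left[of _ m r]) (meson Xj UVt Bj Bt V mult_carrier_mat)+
    ultimately show ?thesis by simp
  qed
  have cA1: "transpose_mat (A i) * A i * XA i * V \<in> carrier_mat m r" if "i < s" for i using that A XA V
    by (meson mult_carrier_mat transpose_carrier_mat)
  have cA2: "transpose_mat (A i) * A i * Y * transpose_mat V * V \<in> carrier_mat m r" if "i < s" "Y \<in> carrier_mat m r" for i Y
    using that A V by (meson mult_carrier_mat transpose_carrier_mat)
  have cB1: "XB j * B j * transpose_mat (B j) * V \<in> carrier_mat m r" if "j < t" for j using that B XB V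
    by (meson mult_carrier_mat transpose_carrier_mat)
  have cB2: "Y * transpose_mat V * B j * transpose_mat (B j) * V \<in> carrier_mat m r" if "j < t" "Y \<in> carrier_mat m r" for j Y
    using that B V by (meson mult_carrier_mat transpose_carrier_mat)
  have sA: "(\<Sum>i<s. (frob (A i * (XA i - (U + \<Delta>) * transpose_mat V)))^2) = (\<Sum>i<s. fA i) - 2 * (ip NA \<Delta> - ip DA \<Delta>) + ip HA \<Delta>"
  proof -
    have "(\<Sum>i<s. (frob (A i * (XA i - (U + \<Delta>) * transpose_mat V)))^2) = (\<Sum>i<s. fA i
     - 2 * (ip (transpose_mat (A i) * A i * XA i * V) \<Delta> - ip (transpose_mat (A i) * A i * U * transpose_mat V * V) \<Delta>)
     + ip (transpose_mat (A i) * A i * \<Delta> * transpose_mat V * V) \<Delta>)" by (rule sum.cong) (auto simp: termA)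
    also have "\<dots> = (\<Sum>i<s. fA i) - 2 * ((\<Sum>i<s. ip (transpose_mat (A i) * A i * XA i * V) \<Delta>) - (\<Sum>i<s. ip (transpose_mat (A i) * A i * U * transpose_mat V * V) \<Delta>))
       + (\<Sum>i<s. ip (transpose_mat (A i) * A i * \<Delta> * transpose_mat V * V) \<Delta>)"
      by (simp add: sum.distrib sum_subtractf sum_distrib_left)
    also have "(\<Sum>i<s. ip (transpose_mat (A i) * A i * XA i * V) \<Delta>) = ip NA \<Delta>"
      unfolding NA_def by (rule ip_msum[symmetric]) (rule cA1)
    also have "(\<Sum>i<s. ip (transpose_mat (A i) * A i * U * transpose_mat V * V) \<Delta>) = ip DA \<Delta>"
      unfolding DA_def by (rule ip_msum[symmetric]) (rule cA2[OF _ U])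
    also have "(\<Sum>i<s. ip (transpose_mat (A i) * A i * \<Delta> * transpose_mat V * V) \<Delta>) = ip HA \<Delta>"
      unfolding HA_def by (rule ip_msum[symmetric]) (rule cA2[OF _ D])
    finally show ?thesis .
  qed
  have sB: "(\<Sum>j<t. (frob ((XB j - (U + \<Delta>) * transpose_mat V) * B j))^2) = (\<Sum>j<t. fB j) - 2 * (ip NB \<Delta> - ip DB \<Delta>) + ip HB \<Delta>"
  proof -
    have "(\<Sum>j<t. (frob ((XB j - (U + \<Delta>) * transpose_mat V) * B j))^2) = (\<Sum>j<t. fB j
     - 2 * (ip (XB j * B j * transpose_mat (B j) * V) \<Delta> - ip (U * transpose_mat V * B j * transpose_mat (B j) * V) \<Delta>)
     + ip (\<Delta> * transpose_mat V * B j * transpose_mat (B j) * V) \<Delta>)" by (rule sum.cong) (auto simp: termB)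
    also have "\<dots> = (\<Sum>j<t. fB j) - 2 * ((\<Sum>j<t. ip (XB j * B j * transpose_mat (B j) * V) \<Delta>) - (\<Sum>j<t. ip (U * transpose_mat V * B j * transpose_mat (B j) * V) \<Delta>))
       + (\<Sum>j<t. ip (\<Delta> * transpose_mat V * B j * transpose_mat (B j) * V) \<Delta>)"
      by (simp add: sum.distrib sum_subtractf sum_distrib_left)
    also have "(\<Sum>j<t. ip (XB j * B j * transpose_mat (B j) * V) \<Delta>) = ip NB \<Delta>"
      unfolding NB_def by (rule ip_msum[symmetric]) (rule cB1)
    also have "(\<Sum>j<t. ip (U * transpose_mat V * B j * transpose_mat (B j) * V) \<Delta>) = ip DB \<Delta>"
      unfolding DB_def by (rule ip_msum[symmetric]) (rule cB2[OF _ U])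
    also have "(\<Sum>j<t. ip (\<Delta> * transpose_mat V * B j * transpose_mat (B j) * V) \<Delta>) = ip HB \<Delta>"
      unfolding HB_def by (rule ip_msum[symmetric]) (rule cB2[OF _ D])
    finally show ?thesis .
  qed
  have HA: "HA = PP * \<Delta> * (transpose_mat V * V)" unfolding HA_def by (rule U_forms(1)[OF D])
  have HB: "HB = \<Delta> * (transpose_mat V * QQ * V)" unfolding HB_def by (rule U_forms(2)[OF D])
  have ipH: "ip (PP * \<Delta> * (transpose_mat V * V) + \<Delta> * (transpose_mat V * QQ * V)) \<Delta> = ip HA \<Delta> + ip HB \<Delta>"
    unfolding HA HB by (rule ip_add_left[of _ m r]) (use PPc D V QQc in auto)
  have ipL: "ip ((DA + DB) - (NA + NB)) \<Delta> = ip DA \<Delta> + ip DB \<Delta> - ip NA \<Delta> - ip NB \<Delta>"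
    by (simp add: ip_minus_left[of _ m r] ip_add_left[of _ m r] NA_def NB_def DA_def DB_def)
  show ?thesis
    unfolding objF_def sA sB ipH ipL[unfolded NA_def NB_def DA_def DB_def]
    unfolding fA_def fB_def NA_def[symmetric] NB_def[symmetric] DA_def[symmetric] DB_def[symmetric]
    by (simp add: algebra_simps)
qed

lemma U_part:
  assumes posU: "pos_mat (msum m r s (\<lambda>i. transpose_mat (A i) * A i * U * transpose_mat V * V)
                       + msum m r t (\<lambda>j. U * transpose_mat V * B j * transpose_mat (B j) * V))"
  shows "nonneg_mat (hadamard U (hdiv
                (msum m r s (\<lambda>i. transpose_mat (A i) * A i * XA i * V)
                 + msum m r t (\<lambda>j. XB j * B j * transpose_mat (B j) * V))
                (msum m r s (\<lambda>i. transpose_mat (A i) * A i * U * transpose_mat V * V)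
                 + msum m r t (\<lambda>j. U * transpose_mat V * B j * transpose_mat (B j) * V))))
     \<and> objF s t XA XB A B (hadamard U (hdiv
                (msum m r s (\<lambda>i. transpose_mat (A i) * A i * XA i * V)
                 + msum m r t (\<lambda>j. XB j * B j * transpose_mat (B j) * V))
                (msum m r s (\<lambda>i. transpose_mat (A i) * A i * U * transpose_mat V * V)
                 + msum m r t (\<lambda>j. U * transpose_mat V * B j * transpose_mat (B j) * V)))) V
       \<le> objF s t XA XB A B U V"
proof (rule mu_step[of U m r _ _ "\<lambda>X. objF s t XA XB A B X V" "\<lambda>\<Delta>. PP * \<Delta> * (transpose_mat V * V) + \<Delta> * (transpose_mat V * QQ * V)"])
  have Vt: "transpose_mat V \<in> carrier_mat r n" using V by simp
  have W: "transpose_mat V * V \<in> carrier_mat r r" using V by simp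
  have R: "transpose_mat V * QQ * V \<in> carrier_mat r r" using V QQc by simp
  have nW: "nonneg_mat (transpose_mat V * V)" by (rule nonneg_mult[OF nonneg_transpose[OF nnV] nnV Vt V])
  have nR: "nonneg_mat (transpose_mat V * QQ * V)"
    by (rule nonneg_mult[OF nonneg_mult[OF nonneg_transpose[OF nnV] _ Vt QQc] nnV _ V])
       (use nnBB QQc Vt in \<open>auto simp: QQ_def\<close>)
  show "U \<in> carrier_mat m r" by (rule U)
  show "nonneg_mat U" by (rule nnU)
  show "pos_mat (msum m r s (\<lambda>i. transpose_mat (A i) * A i * U * transpose_mat V * V)
                 + msum m r t (\<lambda>j. U * transpose_mat V * B j * transpose_mat (B j) * V))" by (rule posU)
  show "msum m r s (\<lambda>i. transpose_mat (A i) * A i * XA i * V) + msum m r t (\<lambda>j. XB j * B j * transpose_mat (B j) * V) \<in> carrier_mat m r" by simp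
  show "msum m r s (\<lambda>i. transpose_mat (A i) * A i * U * transpose_mat V * V)
                 + msum m r t (\<lambda>j. U * transpose_mat V * B j * transpose_mat (B j) * V) \<in> carrier_mat m r" by simp
  have NA: "msum m r s (\<lambda>i. transpose_mat (A i) * A i * XA i * V) = msum m n s (\<lambda>i. transpose_mat (A i) * A i * XA i) * V"
    by (rule msum_mult_right) (use A XA V in \<open>meson mult_carrier_mat transpose_carrier_mat\<close>, rule V)
  have NB: "msum m r t (\<lambda>j. XB j * B j * transpose_mat (B j) * V) = msum m n t (\<lambda>j. XB j * B j * transpose_mat (B j)) * V"
    by (rule msum_mult_right) (use B XB V in \<open>meson mult_carrier_mat transpose_carrier_mat\<close>, rule V)
  show "nonneg_mat (msum m r s (\<lambda>i. transpose_mat (A i) * A i * XA i * V) + msum m r t (\<lambda>j. XB j * B j * transpose_mat (B j) * V))"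
    unfolding NA NB
    by (rule nonneg_add[OF nonneg_mult[OF nnAAX nnV _ V] nonneg_mult[OF nnXBB nnV _ V]]) (use V in auto)
  show "objF s t XA XB A B (U + \<Delta>) V = objF s t XA XB A B U V
     + ip ((msum m r s (\<lambda>i. transpose_mat (A i) * A i * U * transpose_mat V * V)
                 + msum m r t (\<lambda>j. U * transpose_mat V * B j * transpose_mat (B j) * V))
           - (msum m r s (\<lambda>i. transpose_mat (A i) * A i * XA i * V)
                 + msum m r t (\<lambda>j. XB j * B j * transpose_mat (B j) * V))) \<Delta>
     + 1/2 * ip (PP * \<Delta> * (transpose_mat V * V) + \<Delta> * (transpose_mat V * QQ * V)) \<Delta>"
    if "\<Delta> \<in> carrier_mat m r" for \<Delta> by (rule U_expand[OF that])
  show "ip (PP * X * (transpose_mat V * V) + X * (transpose_mat V * QQ * V)) X \<le>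
     (\<Sum>a<m. \<Sum>b<r. (msum m r s (\<lambda>i. transpose_mat (A i) * A i * U * transpose_mat V * V)
                 + msum m r t (\<lambda>j. U * transpose_mat V * B j * transpose_mat (B j) * V)) $$ (a,b) * U $$ (a,b) * (w a b)^2)"
    if X: "X \<in> carrier_mat m r" and Xe: "\<And>a b. a < m \<Longrightarrow> b < r \<Longrightarrow> X $$ (a,b) = U $$ (a,b) * w a b" for X w
  proof -
    have d1: "ip (PP * X * (transpose_mat V * V)) X \<le> (\<Sum>a<m. \<Sum>b<r. (PP * U * (transpose_mat V * V)) $$ (a,b) * U $$ (a,b) * (w a b)^2)"
      by (rule dom_PXW[OF PPc W U X _ _ _ nW nnU Xe])
         (blast intro: sym_entry[OF PPs PPc] sym_entry[OF sym_TM1[OF V] W], blast intro: sym_entry[OF PPs PPc] sym_entry[OF sym_TM1[OF V] W], simp add: nnAA PP_def)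
    have d2: "ip (1\<^sub>m m * X * (transpose_mat V * QQ * V)) X \<le> (\<Sum>a<m. \<Sum>b<r. (1\<^sub>m m * U * (transpose_mat V * QQ * V)) $$ (a,b) * U $$ (a,b) * (w a b)^2)"
      by (rule dom_PXW[OF one_carrier_mat R U X _ _ nonneg_one nR nnU Xe])
         (simp, blast intro: sym_entry[OF sym_TZM[OF V QQc QQs] R])
    have "ip (PP * X * (transpose_mat V * V) + X * (transpose_mat V * QQ * V)) X
        = ip (PP * X * (transpose_mat V * V)) X + ip (1\<^sub>m m * X * (transpose_mat V * QQ * V)) X"
      by (subst ip_add_left[of _ m r]) (use PPc X W R in auto)
    also have "\<dots> \<le> (\<Sum>a<m. \<Sum>b<r. (PP * U * (transpose_mat V * V)) $$ (a,b) * U $$ (a,b) * (w a b)^2)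
        + (\<Sum>a<m. \<Sum>b<r. (1\<^sub>m m * U * (transpose_mat V * QQ * V)) $$ (a,b) * U $$ (a,b) * (w a b)^2)"
      using d1 d2 by simp
    also have "\<dots> = (\<Sum>a<m. \<Sum>b<r. (PP * U * (transpose_mat V * V) + U * (transpose_mat V * QQ * V)) $$ (a,b) * U $$ (a,b) * (w a b)^2)"
      unfolding sum.distrib[symmetric] by (intro sum.cong refl) (use PPc U W R in \<open>auto simp: algebra_simps\<close>)
    also have "PP * U * (transpose_mat V * V) + U * (transpose_mat V * QQ * V) = 
       msum m r s (\<lambda>i. transpose_mat (A i) * A i * U * transpose_mat V * V)
                 + msum m r t (\<lambda>j. U * transpose_mat V * B j * transpose_mat (B j) * V)"
      using U_forms[OF U] by simp
    finally show ?thesis .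
  qed
qed

lemma V_forms:
  assumes Y: "Y \<in> carrier_mat n r"
  shows "msum n r s (\<lambda>i. Y * transpose_mat U * transpose_mat (A i) * A i * U) = Y * (transpose_mat U * PP * U)"
    and "msum n r t (\<lambda>j. B j * transpose_mat (B j) * Y * transpose_mat U * U) = QQ * Y * (transpose_mat U * U)"
proof -
  have Ut: "transpose_mat U \<in> carrier_mat r m" using U by simp
  have W: "transpose_mat U * U \<in> carrier_mat r r" using U by simp
  have YUt: "Y * transpose_mat U \<in> carrier_mat n m" using Y U by simp
  have "msum n r s (\<lambda>i. Y * transpose_mat U * transpose_mat (A i) * A i * U)
      = msum n r s (\<lambda>i. (Y * transpose_mat U) * (transpose_mat (A i) * A i * U))"
  proof (rule msum_cong)
    fix i assume i: "i < s"
    have Ai: "A i \<in> carrier_mat (k i) m" "transpose_mat (A i) \<in> carrier_mat m (k i)" using A[OF i] by auto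
    have c1: "Y * transpose_mat U * transpose_mat (A i) \<in> carrier_mat n (k i)" using YUt Ai by simp
    have AU: "A i * U \<in> carrier_mat (k i) r" using Ai U by simp
    show "Y * transpose_mat U * transpose_mat (A i) * A i * U = (Y * transpose_mat U) * (transpose_mat (A i) * A i * U)"
      by (simp only: assoc_mult_mat[OF c1 Ai(1) U] assoc_mult_mat[OF YUt Ai(2) AU] assoc_mult_mat[OF Ai(2) Ai(1) U])
  qed
  also have "\<dots> = (Y * transpose_mat U) * msum m r s (\<lambda>i. transpose_mat (A i) * A i * U)"
  proof (rule msum_mult_left)
    fix i assume "i < s" thus "transpose_mat (A i) * A i * U \<in> carrier_mat m r" using ATA_c U by (meson mult_carrier_mat)
  qed (rule YUt)
  also have "msum m r s (\<lambda>i. transpose_mat (A i) * A i * U) = PP * U" unfolding PP_def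
    by (rule msum_mult_right) (use ATA_c U in auto)
  also have "(Y * transpose_mat U) * (PP * U) = Y * (transpose_mat U * PP * U)"
  proof -
    have "(Y * transpose_mat U) * (PP * U) = Y * (transpose_mat U * (PP * U))"
      using assoc_mult_mat[OF Y Ut, of "PP * U" r] PPc U by simp
    also have "transpose_mat U * (PP * U) = transpose_mat U * PP * U"
      using assoc_mult_mat[OF Ut PPc U] by simp
    finally show ?thesis .
  qed
  finally show "msum n r s (\<lambda>i. Y * transpose_mat U * transpose_mat (A i) * A i * U) = Y * (transpose_mat U * PP * U)" .
  have YW: "Y * (transpose_mat U * U) \<in> carrier_mat n r" using Y W by simp
  have "msum n r t (\<lambda>j. B j * transpose_mat (B j) * Y * transpose_mat U * U)
      = msum n r t (\<lambda>j. (B j * transpose_mat (B j)) * (Y * (transpose_mat U * U)))"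
  proof (rule msum_cong)
    fix j assume j: "j < t"
    have c0: "B j * transpose_mat (B j) \<in> carrier_mat n n" using B[OF j] by simp
    have c1: "B j * transpose_mat (B j) * Y \<in> carrier_mat n r" using c0 Y by simp
    show "B j * transpose_mat (B j) * Y * transpose_mat U * U = (B j * transpose_mat (B j)) * (Y * (transpose_mat U * U))"
      by (simp only: assoc_mult_mat[OF c1 Ut U] assoc_mult_mat[OF c0 Y W])
  qed
  also have "\<dots> = QQ * (Y * (transpose_mat U * U))" unfolding QQ_def
    by (rule msum_mult_right) (use BBT_c YW in auto)
  also have "\<dots> = QQ * Y * (transpose_mat U * U)" using assoc_mult_mat[OF QQc Y W] by simp
  finally show "msum n r t (\<lambda>j. B j * transpose_mat (B j) * Y * transpose_mat U * U) = QQ * Y * (transpose_mat U * U)" .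
qed

lemma V_expand:
  assumes D: "\<Delta> \<in> carrier_mat n r"
  shows "objF s t XA XB A B U (V + \<Delta>) = objF s t XA XB A B U V
     + ip ((msum n r s (\<lambda>i. V * transpose_mat U * transpose_mat (A i) * A i * U)
                 + msum n r t (\<lambda>j. B j * transpose_mat (B j) * V * transpose_mat U * U))
           - (msum n r s (\<lambda>i. transpose_mat (XA i) * transpose_mat (A i) * A i * U)
                 + msum n r t (\<lambda>j. B j * transpose_mat (B j) * transpose_mat (XB j) * U))) \<Delta>
     + 1/2 * ip (\<Delta> * (transpose_mat U * PP * U) + QQ * \<Delta> * (transpose_mat U * U)) \<Delta>"
proof -
  have Ut: "transpose_mat U \<in> carrier_mat r m" using U by simp
  have Vt: "transpose_mat V \<in> carrier_mat r n" using V by simp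
  have Dt: "transpose_mat \<Delta> \<in> carrier_mat r n" using D by simp
  have UVt: "U * transpose_mat V \<in> carrier_mat m n" using U V by simp
  have UDt: "U * transpose_mat \<Delta> \<in> carrier_mat m n" using D U by simp
  have VUt: "V * transpose_mat U \<in> carrier_mat n m" using U V by simp
  have UD: "U * transpose_mat (V + \<Delta>) = U * transpose_mat V + U * transpose_mat \<Delta>"
    using transpose_add[OF V D] mult_add_distrib_mat[OF U Vt Dt] by simp
  have tUVt: "transpose_mat (U * transpose_mat V) = V * transpose_mat U"
    using transpose_mult[OF U Vt] by simp
  define NA where "NA = msum n r s (\<lambda>i. transpose_mat (XA i) * transpose_mat (A i) * A i * U)"
  define NB where "NB = msum n r t (\<lambda>j. B j * transpose_mat (B j) * transpose_mat (XB j) * U)"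
  define DA where "DA = msum n r s (\<lambda>i. V * transpose_mat U * transpose_mat (A i) * A i * U)"
  define DB where "DB = msum n r t (\<lambda>j. B j * transpose_mat (B j) * V * transpose_mat U * U)"
  define HA where "HA = msum n r s (\<lambda>i. \<Delta> * transpose_mat U * transpose_mat (A i) * A i * U)"
  define HB where "HB = msum n r t (\<lambda>j. B j * transpose_mat (B j) * \<Delta> * transpose_mat U * U)"
  define fA where "fA i = (frob (A i * (XA i - U * transpose_mat V)))^2" for i
  define fB where "fB j = (frob ((XB j - U * transpose_mat V) * B j))^2" for j
  have termA: "(frob (A i * (XA i - U * transpose_mat (V + \<Delta>))))^2 = fA i
     - 2 * (ip (transpose_mat (XA i) * transpose_mat (A i) * A i * U) \<Delta> - ip (V * transpose_mat U * transpose_mat (A i) * A i * U) \<Delta>)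
     + ip (\<Delta> * transpose_mat U * transpose_mat (A i) * A i * U) \<Delta>" if i: "i < s" for i
  proof -
    have Ai: "A i \<in> carrier_mat (k i) m" and Xi: "XA i \<in> carrier_mat m n" using A XA i by auto
    have At: "transpose_mat (A i) \<in> carrier_mat m (k i)" using Ai by simp
    have Xt: "transpose_mat (XA i) \<in> carrier_mat n m" using Xi by simp
    have E: "XA i - U * transpose_mat V \<in> carrier_mat m n" by (rule minus_carrier_mat[OF UVt])
    have "XA i - U * transpose_mat (V + \<Delta>) = (XA i - U * transpose_mat V) - U * transpose_mat \<Delta>"
      unfolding UD by (rule minus_plus_mat[OF Xi UVt UDt])
    hence "(frob (A i * (XA i - U * transpose_mat (V + \<Delta>))))^2 = fA i
       - 2 * ip (transpose_mat (XA i - U * transpose_mat V) * transpose_mat (A i) * A i * U) \<Delta>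
       + ip (\<Delta> * transpose_mat U * transpose_mat (A i) * A i * U) \<Delta>"
      unfolding fA_def frob_sq using QC[OF Ai E D U] by simp
    moreover have "transpose_mat (XA i - U * transpose_mat V) * transpose_mat (A i) * A i * U
        = transpose_mat (XA i) * transpose_mat (A i) * A i * U - V * transpose_mat U * transpose_mat (A i) * A i * U"
    proof -
      have "transpose_mat (XA i - U * transpose_mat V) = transpose_mat (XA i) - V * transpose_mat U"
        using transpose_minus[OF Xi UVt] tUVt by simp
      hence "transpose_mat (XA i - U * transpose_mat V) * transpose_mat (A i) = transpose_mat (XA i) * transpose_mat (A i) - V * transpose_mat U * transpose_mat (A i)"
        using minus_mult_distrib_mat[OF Xt VUt At] by simp
      hence "transpose_mat (XA i - U * transpose_mat V) * transpose_mat (A i) * A i = transpose_mat (XA i) * transpose_mat (A i) * A i - V * transpose_mat U * transpose_mat (A i) * A i"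
        using minus_mult_distrib_mat[of "transpose_mat (XA i) * transpose_mat (A i)" n "k i" "V * transpose_mat U * transpose_mat (A i)" "A i" m] Xt VUt At Ai by simp
      hence "transpose_mat (XA i - U * transpose_mat V) * transpose_mat (A i) * A i * U = (transpose_mat (XA i) * transpose_mat (A i) * A i - V * transpose_mat U * transpose_mat (A i) * A i) * U"
        by simp
      also have "\<dots> = transpose_mat (XA i) * transpose_mat (A i) * A i * U - V * transpose_mat U * transpose_mat (A i) * A i * U"
        by (rule minus_mult_distrib_mat[where nr=n and n=m and nc=r]) (meson Xt VUt At Ai U mult_carrier_mat)+
      finally show ?thesis .
    qed
    moreover have "ip (transpose_mat (XA i) * transpose_mat (A i) * A i * U - V * transpose_mat U * transpose_mat (A i) * A i * U) \<Delta>
       = ip (transpose_mat (XA i) * transpose_mat (A i) * A i * U) \<Delta> - ip (V * transpose_mat U * transpose_mat (A i) * A i * U) \<Delta>"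
      by (rule ip_minus_left[of _ n r]) (meson Xt VUt At Ai U mult_carrier_mat)+
    ultimately show ?thesis by simp
  qed
  have termB: "(frob ((XB j - U * transpose_mat (V + \<Delta>)) * B j))^2 = fB j
     - 2 * (ip (B j * transpose_mat (B j) * transpose_mat (XB j) * U) \<Delta> - ip (B j * transpose_mat (B j) * V * transpose_mat U * U) \<Delta>)
     + ip (B j * transpose_mat (B j) * \<Delta> * transpose_mat U * U) \<Delta>" if j: "j < t" for j
  proof -
    have Bj: "B j \<in> carrier_mat n (l j)" and Xj: "XB j \<in> carrier_mat m n" using B XB j by auto
    have Bt: "transpose_mat (B j) \<in> carrier_mat (l j) n" using Bj by simp
    have BBt: "B j * transpose_mat (B j) \<in> carrier_mat n n" using Bj by simp
    have Xt: "transpose_mat (XB j) \<in> carrier_mat n m" using Xj by simp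
    have E: "XB j - U * transpose_mat V \<in> carrier_mat m n" by (rule minus_carrier_mat[OF UVt])
    have "XB j - U * transpose_mat (V + \<Delta>) = (XB j - U * transpose_mat V) - U * transpose_mat \<Delta>"
      unfolding UD by (rule minus_plus_mat[OF Xj UVt UDt])
    hence "(frob ((XB j - U * transpose_mat (V + \<Delta>)) * B j))^2 = fB j
       - 2 * ip (B j * transpose_mat (B j) * transpose_mat (XB j - U * transpose_mat V) * U) \<Delta>
       + ip (B j * transpose_mat (B j) * \<Delta> * transpose_mat U * U) \<Delta>"
      unfolding fB_def frob_sq using QD[OF E Bj D U] by simp
    moreover have "B j * transpose_mat (B j) * transpose_mat (XB j - U * transpose_mat V) * U
        = B j * transpose_mat (B j) * transpose_mat (XB j) * U - B j * transpose_mat (B j) * V * transpose_mat U * U"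
    proof -
      have "transpose_mat (XB j - U * transpose_mat V) = transpose_mat (XB j) - V * transpose_mat U"
        using transpose_minus[OF Xj UVt] tUVt by simp
      hence "B j * transpose_mat (B j) * transpose_mat (XB j - U * transpose_mat V) = B j * transpose_mat (B j) * transpose_mat (XB j) - B j * transpose_mat (B j) * (V * transpose_mat U)"
        using mult_minus_distrib_mat[OF BBt Xt VUt] by simp
      also have "B j * transpose_mat (B j) * (V * transpose_mat U) = B j * transpose_mat (B j) * V * transpose_mat U"
        using assoc_mult_mat[OF BBt V Ut] by simp
      finally have "B j * transpose_mat (B j) * transpose_mat (XB j - U * transpose_mat V) * U = (B j * transpose_mat (B j) * transpose_mat (XB j) - B j * transpose_mat (B j) * V * transpose_mat U) * U"
        by simp
      also have "\<dots> = B j * transpose_mat (B j) * transpose_mat (XB j) * U - B j * transpose_mat (B j) * V * transpose_mat U * U"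
        by (rule minus_mult_distrib_mat[where nr=n and n=m and nc=r]) (meson BBt Xt V Ut U mult_carrier_mat)+
      finally show ?thesis .
    qed
    moreover have "ip (B j * transpose_mat (B j) * transpose_mat (XB j) * U - B j * transpose_mat (B j) * V * transpose_mat U * U) \<Delta>
       = ip (B j * transpose_mat (B j) * transpose_mat (XB j) * U) \<Delta> - ip (B j * transpose_mat (B j) * V * transpose_mat U * U) \<Delta>"
      by (rule ip_minus_left[of _ n r]) (meson BBt Xt V Ut U mult_carrier_mat)+
    ultimately show ?thesis by simp
  qed
  have cA1: "transpose_mat (XA i) * transpose_mat (A i) * A i * U \<in> carrier_mat n r" if "i < s" for i using that A XA U
    by (meson mult_carrier_mat transpose_carrier_mat)
  have cA2: "Y * transpose_mat U * transpose_mat (A i) * A i * U \<in> carrier_mat n r" if "i < s" "Y \<in> carrier_mat n r" for i Y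
    using that A U by (meson mult_carrier_mat transpose_carrier_mat)
  have cB1: "B j * transpose_mat (B j) * transpose_mat (XB j) * U \<in> carrier_mat n r" if "j < t" for j using that B XB U
    by (meson mult_carrier_mat transpose_carrier_mat)
  have cB2: "B j * transpose_mat (B j) * Y * transpose_mat U * U \<in> carrier_mat n r" if "j < t" "Y \<in> carrier_mat n r" for j Y
    using that B U by (meson mult_carrier_mat transpose_carrier_mat)
  have sA: "(\<Sum>i<s. (frob (A i * (XA i - U * transpose_mat (V + \<Delta>))))^2) = (\<Sum>i<s. fA i) - 2 * (ip NA \<Delta> - ip DA \<Delta>) + ip HA \<Delta>"
  proof -
    have "(\<Sum>i<s. (frob (A i * (XA i - U * transpose_mat (V + \<Delta>))))^2) = (\<Sum>i<s. fA i
     - 2 * (ip (transpose_mat (XA i) * transpose_mat (A i) * A i * U) \<Delta> - ip (V * transpose_mat U * transpose_mat (A i) * A i * U) \<Delta>)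
     + ip (\<Delta> * transpose_mat U * transpose_mat (A i) * A i * U) \<Delta>)" by (rule sum.cong) (auto simp: termA)
    also have "\<dots> = (\<Sum>i<s. fA i) - 2 * ((\<Sum>i<s. ip (transpose_mat (XA i) * transpose_mat (A i) * A i * U) \<Delta>) - (\<Sum>i<s. ip (V * transpose_mat U * transpose_mat (A i) * A i * U) \<Delta>))
       + (\<Sum>i<s. ip (\<Delta> * transpose_mat U * transpose_mat (A i) * A i * U) \<Delta>)"
      by (simp add: sum.distrib sum_subtractf sum_distrib_left)
    also have "(\<Sum>i<s. ip (transpose_mat (XA i) * transpose_mat (A i) * A i * U) \<Delta>) = ip NA \<Delta>"
      unfolding NA_def by (rule ip_msum[symmetric]) (rule cA1)
    also have "(\<Sum>i<s. ip (V * transpose_mat U * transpose_mat (A i) * A i * U) \<Delta>) = ip DA \<Delta>"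
      unfolding DA_def by (rule ip_msum[symmetric]) (rule cA2[OF _ V])
    also have "(\<Sum>i<s. ip (\<Delta> * transpose_mat U * transpose_mat (A i) * A i * U) \<Delta>) = ip HA \<Delta>"
      unfolding HA_def by (rule ip_msum[symmetric]) (rule cA2[OF _ D])
    finally show ?thesis .
  qed
  have sB: "(\<Sum>j<t. (frob ((XB j - U * transpose_mat (V + \<Delta>)) * B j))^2) = (\<Sum>j<t. fB j) - 2 * (ip NB \<Delta> - ip DB \<Delta>) + ip HB \<Delta>"
  proof -
    have "(\<Sum>j<t. (frob ((XB j - U * transpose_mat (V + \<Delta>)) * B j))^2) = (\<Sum>j<t. fB j
     - 2 * (ip (B j * transpose_mat (B j) * transpose_mat (XB j) * U) \<Delta> - ip (B j * transpose_mat (B j) * V * transpose_mat U * U) \<Delta>)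
     + ip (B j * transpose_mat (B j) * \<Delta> * transpose_mat U * U) \<Delta>)" by (rule sum.cong) (auto simp: termB)
    also have "\<dots> = (\<Sum>j<t. fB j) - 2 * ((\<Sum>j<t. ip (B j * transpose_mat (B j) * transpose_mat (XB j) * U) \<Delta>) - (\<Sum>j<t. ip (B j * transpose_mat (B j) * V * transpose_mat U * U) \<Delta>))
       + (\<Sum>j<t. ip (B j * transpose_mat (B j) * \<Delta> * transpose_mat U * U) \<Delta>)"
      by (simp add: sum.distrib sum_subtractf sum_distrib_left)
    also have "(\<Sum>j<t. ip (B j * transpose_mat (B j) * transpose_mat (XB j) * U) \<Delta>) = ip NB \<Delta>"
      unfolding NB_def by (rule ip_msum[symmetric]) (rule cB1)
    also have "(\<Sum>j<t. ip (B j * transpose_mat (B j) * V * transpose_mat U * U) \<Delta>) = ip DB \<Delta>"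
      unfolding DB_def by (rule ip_msum[symmetric]) (rule cB2[OF _ V])
    also have "(\<Sum>j<t. ip (B j * transpose_mat (B j) * \<Delta> * transpose_mat U * U) \<Delta>) = ip HB \<Delta>"
      unfolding HB_def by (rule ip_msum[symmetric]) (rule cB2[OF _ D])
    finally show ?thesis .
  qed
  have HA: "HA = \<Delta> * (transpose_mat U * PP * U)" unfolding HA_def by (rule V_forms(1)[OF D])
  have HB: "HB = QQ * \<Delta> * (transpose_mat U * U)" unfolding HB_def by (rule V_forms(2)[OF D])
  have ipH: "ip (\<Delta> * (transpose_mat U * PP * U) + QQ * \<Delta> * (transpose_mat U * U)) \<Delta> = ip HA \<Delta> + ip HB \<Delta>"
    unfolding HA HB by (rule ip_add_left[of _ n r]) (use PPc D U QQc in auto)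
  have ipL: "ip ((DA + DB) - (NA + NB)) \<Delta> = ip DA \<Delta> + ip DB \<Delta> - ip NA \<Delta> - ip NB \<Delta>"
    by (simp add: ip_minus_left[of _ n r] ip_add_left[of _ n r] NA_def NB_def DA_def DB_def)
  show ?thesis
    unfolding objF_def sA sB ipH ipL[unfolded NA_def NB_def DA_def DB_def]
    unfolding fA_def fB_def NA_def[symmetric] NB_def[symmetric] DA_def[symmetric] DB_def[symmetric]
    by (simp add: algebra_simps)
qed

lemma V_part:
  assumes posV: "pos_mat (msum n r s (\<lambda>i. V * transpose_mat U * transpose_mat (A i) * A i * U)
                       + msum n r t (\<lambda>j. B j * transpose_mat (B j) * V * transpose_mat U * U))"
  shows "nonneg_mat (hadamard V (hdiv
                (msum n r s (\<lambda>i. transpose_mat (XA i) * transpose_mat (A i) * A i * U)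
                 + msum n r t (\<lambda>j. B j * transpose_mat (B j) * transpose_mat (XB j) * U))
                (msum n r s (\<lambda>i. V * transpose_mat U * transpose_mat (A i) * A i * U)
                 + msum n r t (\<lambda>j. B j * transpose_mat (B j) * V * transpose_mat U * U))))
     \<and> objF s t XA XB A B U (hadamard V (hdiv
                (msum n r s (\<lambda>i. transpose_mat (XA i) * transpose_mat (A i) * A i * U)
                 + msum n r t (\<lambda>j. B j * transpose_mat (B j) * transpose_mat (XB j) * U))
                (msum n r s (\<lambda>i. V * transpose_mat U * transpose_mat (A i) * A i * U)
                 + msum n r t (\<lambda>j. B j * transpose_mat (B j) * V * transpose_mat U * U))))
       \<le> objF s t XA XB A B U V"
proof (rule mu_step[of V n r _ _ "\<lambda>X. objF s t XA XB A B U X" "\<lambda>\<Delta>. \<Delta> * (transpose_mat U * PP * U) + QQ * \<Delta> * (transpose_mat U * U)"])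
  have Ut: "transpose_mat U \<in> carrier_mat r m" using U by simp
  have W: "transpose_mat U * U \<in> carrier_mat r r" using U by simp
  have R: "transpose_mat U * PP * U \<in> carrier_mat r r" using U PPc by simp
  have nW: "nonneg_mat (transpose_mat U * U)" by (rule nonneg_mult[OF nonneg_transpose[OF nnU] nnU Ut U])
  have nR: "nonneg_mat (transpose_mat U * PP * U)"
    by (rule nonneg_mult[OF nonneg_mult[OF nonneg_transpose[OF nnU] _ Ut PPc] nnU _ U])
       (use nnAA PPc Ut in \<open>auto simp: PP_def\<close>)
  show "V \<in> carrier_mat n r" by (rule V)
  show "nonneg_mat V" by (rule nnV)
  show "pos_mat (msum n r s (\<lambda>i. V * transpose_mat U * transpose_mat (A i) * A i * U)
                       + msum n r t (\<lambda>j. B j * transpose_mat (B j) * V * transpose_mat U * U))" by (rule posV)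
  show "msum n r s (\<lambda>i. transpose_mat (XA i) * transpose_mat (A i) * A i * U)
                 + msum n r t (\<lambda>j. B j * transpose_mat (B j) * transpose_mat (XB j) * U) \<in> carrier_mat n r" by simp
  show "msum n r s (\<lambda>i. V * transpose_mat U * transpose_mat (A i) * A i * U)
                 + msum n r t (\<lambda>j. B j * transpose_mat (B j) * V * transpose_mat U * U) \<in> carrier_mat n r" by simp
  have NA: "msum n r s (\<lambda>i. transpose_mat (XA i) * transpose_mat (A i) * A i * U)
      = transpose_mat (msum m n s (\<lambda>i. transpose_mat (A i) * A i * XA i)) * U"
  proof -
    have "msum n r s (\<lambda>i. transpose_mat (XA i) * transpose_mat (A i) * A i * U) = msum n m s (\<lambda>i. transpose_mat (XA i) * transpose_mat (A i) * A i) * U"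
      by (rule msum_mult_right) (use A XA U in \<open>meson mult_carrier_mat transpose_carrier_mat\<close>, rule U)
    also have "msum n m s (\<lambda>i. transpose_mat (XA i) * transpose_mat (A i) * A i) = msum n m s (\<lambda>i. transpose_mat (transpose_mat (A i) * A i * XA i))"
    proof (rule msum_cong)
      fix i assume i: "i < s"
      have Ai: "A i \<in> carrier_mat (k i) m" "transpose_mat (A i) \<in> carrier_mat m (k i)" and Xi: "XA i \<in> carrier_mat m n" using A XA i by auto
      have X1: "transpose_mat (A i) * A i \<in> carrier_mat m m" using Ai by simp
      have "transpose_mat (transpose_mat (A i) * A i * XA i) = transpose_mat (XA i) * transpose_mat (transpose_mat (A i) * A i)"
        by (rule transpose_mult[OF X1 Xi])
      also have "transpose_mat (transpose_mat (A i) * A i) = transpose_mat (A i) * A i"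
        using transpose_mult[OF Ai(2) Ai(1)] by simp
      also have "transpose_mat (XA i) * (transpose_mat (A i) * A i) = transpose_mat (XA i) * transpose_mat (A i) * A i"
        using assoc_mult_mat[of "transpose_mat (XA i)" n m "transpose_mat (A i)" "k i" "A i" m] Xi Ai by simp
      finally show "transpose_mat (XA i) * transpose_mat (A i) * A i = transpose_mat (transpose_mat (A i) * A i * XA i)" by simp
    qed
    also have "\<dots> = transpose_mat (msum m n s (\<lambda>i. transpose_mat (A i) * A i * XA i))"
      by (rule msum_transpose) (use A XA in \<open>meson mult_carrier_mat transpose_carrier_mat\<close>)
    finally show ?thesis .
  qed
  have NB: "msum n r t (\<lambda>j. B j * transpose_mat (B j) * transpose_mat (XB j) * U)
      = transpose_mat (msum m n t (\<lambda>j. XB j * B j * transpose_mat (B j))) * U"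
  proof -
    have "msum n r t (\<lambda>j. B j * transpose_mat (B j) * transpose_mat (XB j) * U) = msum n m t (\<lambda>j. B j * transpose_mat (B j) * transpose_mat (XB j)) * U"
      by (rule msum_mult_right) (use B XB U in \<open>meson mult_carrier_mat transpose_carrier_mat\<close>, rule U)
    also have "msum n m t (\<lambda>j. B j * transpose_mat (B j) * transpose_mat (XB j)) = msum n m t (\<lambda>j. transpose_mat (XB j * B j * transpose_mat (B j)))"
    proof (rule msum_cong)
      fix j assume j: "j < t"
      have Bj: "B j \<in> carrier_mat n (l j)" "transpose_mat (B j) \<in> carrier_mat (l j) n" and Xj: "XB j \<in> carrier_mat m n" using B XB j by auto
      have XB1: "XB j * B j \<in> carrier_mat m (l j)" using Bj Xj by simp
      have "transpose_mat (XB j * B j * transpose_mat (B j)) = B j * transpose_mat (XB j * B j)"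
        using transpose_mult[OF XB1 Bj(2)] by simp
      also have "transpose_mat (XB j * B j) = transpose_mat (B j) * transpose_mat (XB j)"
        by (rule transpose_mult[OF Xj Bj(1)])
      also have "B j * (transpose_mat (B j) * transpose_mat (XB j)) = B j * transpose_mat (B j) * transpose_mat (XB j)"
        using assoc_mult_mat[of "B j" n "l j" "transpose_mat (B j)" n "transpose_mat (XB j)" m] Xj Bj by simp
      finally show "B j * transpose_mat (B j) * transpose_mat (XB j) = transpose_mat (XB j * B j * transpose_mat (B j))" by simp
    qed
    also have "\<dots> = transpose_mat (msum m n t (\<lambda>j. XB j * B j * transpose_mat (B j)))"
      by (rule msum_transpose) (use B XB in \<open>meson mult_carrier_mat transpose_carrier_mat\<close>)
    finally show ?thesis .
  qed
  show "nonneg_mat (msum n r s (\<lambda>i. transpose_mat (XA i) * transpose_mat (A i) * A i * U)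
                 + msum n r t (\<lambda>j. B j * transpose_mat (B j) * transpose_mat (XB j) * U))"
    unfolding NA NB
    by (rule nonneg_add[OF nonneg_mult[OF nonneg_transpose[OF nnAAX] nnU _ U] nonneg_mult[OF nonneg_transpose[OF nnXBB] nnU _ U]]) (use U in auto)
  show "objF s t XA XB A B U (V + \<Delta>) = objF s t XA XB A B U V
     + ip ((msum n r s (\<lambda>i. V * transpose_mat U * transpose_mat (A i) * A i * U)
                 + msum n r t (\<lambda>j. B j * transpose_mat (B j) * V * transpose_mat U * U))
           - (msum n r s (\<lambda>i. transpose_mat (XA i) * transpose_mat (A i) * A i * U)
                 + msum n r t (\<lambda>j. B j * transpose_mat (B j) * transpose_mat (XB j) * U))) \<Delta>
     + 1/2 * ip (\<Delta> * (transpose_mat U * PP * U) + QQ * \<Delta> * (transpose_mat U * U)) \<Delta>"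
    if "\<Delta> \<in> carrier_mat n r" for \<Delta> by (rule V_expand[OF that])
  show "ip (X * (transpose_mat U * PP * U) + QQ * X * (transpose_mat U * U)) X \<le>
     (\<Sum>a<n. \<Sum>b<r. (msum n r s (\<lambda>i. V * transpose_mat U * transpose_mat (A i) * A i * U)
                 + msum n r t (\<lambda>j. B j * transpose_mat (B j) * V * transpose_mat U * U)) $$ (a,b) * V $$ (a,b) * (w a b)^2)"
    if X: "X \<in> carrier_mat n r" and Xe: "\<And>a b. a < n \<Longrightarrow> b < r \<Longrightarrow> X $$ (a,b) = V $$ (a,b) * w a b" for X w
  proof -
    have d1: "ip (1\<^sub>m n * X * (transpose_mat U * PP * U)) X \<le> (\<Sum>a<n. \<Sum>b<r. (1\<^sub>m n * V * (transpose_mat U * PP * U)) $$ (a,b) * V $$ (a,b) * (w a b)^2)"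
      by (rule dom_PXW[OF one_carrier_mat R V X _ _ nonneg_one nR nnV Xe])
         (simp, blast intro: sym_entry[OF sym_TZM[OF U PPc PPs] R])
    have d2: "ip (QQ * X * (transpose_mat U * U)) X \<le> (\<Sum>a<n. \<Sum>b<r. (QQ * V * (transpose_mat U * U)) $$ (a,b) * V $$ (a,b) * (w a b)^2)"
      by (rule dom_PXW[OF QQc W V X _ _ _ nW nnV Xe])
         (blast intro: sym_entry[OF QQs QQc] sym_entry[OF sym_TM1[OF U] W], blast intro: sym_entry[OF QQs QQc] sym_entry[OF sym_TM1[OF U] W], simp add: nnBB QQ_def)
    have "ip (X * (transpose_mat U * PP * U) + QQ * X * (transpose_mat U * U)) X
        = ip (1\<^sub>m n * X * (transpose_mat U * PP * U)) X + ip (QQ * X * (transpose_mat U * U)) X"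
      by (subst ip_add_left[of _ n r]) (use QQc X W R in auto)
    also have "\<dots> \<le> (\<Sum>a<n. \<Sum>b<r. (1\<^sub>m n * V * (transpose_mat U * PP * U)) $$ (a,b) * V $$ (a,b) * (w a b)^2)
        + (\<Sum>a<n. \<Sum>b<r. (QQ * V * (transpose_mat U * U)) $$ (a,b) * V $$ (a,b) * (w a b)^2)"
      using d1 d2 by simp
    also have "\<dots> = (\<Sum>a<n. \<Sum>b<r. (V * (transpose_mat U * PP * U) + QQ * V * (transpose_mat U * U)) $$ (a,b) * V $$ (a,b) * (w a b)^2)"
      unfolding sum.distrib[symmetric] by (intro sum.cong refl) (use QQc V W R in \<open>auto simp: algebra_simps\<close>)
    also have "V * (transpose_mat U * PP * U) + QQ * V * (transpose_mat U * U) = 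
       msum n r s (\<lambda>i. V * transpose_mat U * transpose_mat (A i) * A i * U)
                 + msum n r t (\<lambda>j. B j * transpose_mat (B j) * V * transpose_mat U * U)"
      using V_forms[OF V] by simp
    finally show ?thesis .
  qed
qed

end

theorem mainTheorem7:
  fixes s t m n r :: nat
    and XA XB A B :: "nat \<Rightarrow> real mat"
    and k l :: "nat \<Rightarrow> nat"
    and U V :: "real mat"
  assumes XA: "\<And>i. i < s \<Longrightarrow> XA i \<in> carrier_mat m n"
    and XB: "\<And>j. j < t \<Longrightarrow> XB j \<in> carrier_mat m n"
    and A: "\<And>i. i < s \<Longrightarrow> A i \<in> carrier_mat (k i) m"
    and B: "\<And>j. j < t \<Longrightarrow> B j \<in> carrier_mat n (l j)"
    and U: "U \<in> carrier_mat m r"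
    and V: "V \<in> carrier_mat n r"
    and nnU: "nonneg_mat U"
    and nnV: "nonneg_mat V"
    and nnAA: "nonneg_mat (msum m m s (\<lambda>i. transpose_mat (A i) * A i))"
    and nnBB: "nonneg_mat (msum n n t (\<lambda>j. B j * transpose_mat (B j)))"
    and nnAAX: "nonneg_mat (msum m n s (\<lambda>i. transpose_mat (A i) * A i * XA i))"
    and nnXBB: "nonneg_mat (msum m n t (\<lambda>j. XB j * B j * transpose_mat (B j)))"
    and posU: "pos_mat (msum m r s (\<lambda>i. transpose_mat (A i) * A i * U * transpose_mat V * V)
                       + msum m r t (\<lambda>j. U * transpose_mat V * B j * transpose_mat (B j) * V))"
    and posV: "pos_mat (msum n r s (\<lambda>i. V * transpose_mat U * transpose_mat (A i) * A i * U)
                       + msum n r t (\<lambda>j. B j * transpose_mat (B j) * V * transpose_mat U * U))"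
  shows "let U' = hadamard U (hdiv
                (msum m r s (\<lambda>i. transpose_mat (A i) * A i * XA i * V)
                 + msum m r t (\<lambda>j. XB j * B j * transpose_mat (B j) * V))
                (msum m r s (\<lambda>i. transpose_mat (A i) * A i * U * transpose_mat V * V)
                 + msum m r t (\<lambda>j. U * transpose_mat V * B j * transpose_mat (B j) * V)));
             V' = hadamard V (hdiv
                (msum n r s (\<lambda>i. transpose_mat (XA i) * transpose_mat (A i) * A i * U)
                 + msum n r t (\<lambda>j. B j * transpose_mat (B j) * transpose_mat (XB j) * U))
                (msum n r s (\<lambda>i. V * transpose_mat U * transpose_mat (A i) * A i * U)
                 + msum n r t (\<lambda>j. B j * transpose_mat (B j) * V * transpose_mat U * U)))
         in nonneg_mat U' \<and> nonneg_mat V'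
            \<and> objF s t XA XB A B U' V \<le> objF s t XA XB A B U V
            \<and> objF s t XA XB A B U V' \<le> objF s t XA XB A B U V"
proof -
  note u = U_part[OF XA XB A B U V nnU nnV nnAA nnBB nnAAX nnXBB posU]
  note v = V_part[OF XA XB A B U V nnU nnV nnAA nnBB nnAAX nnXBB posV]
  show ?thesis unfolding Let_def using u v by blast
qed

end
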